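(* Let $A\ge0$. A smooth path $c:[a,b]\times S^1\to\mathbb R^2$ of immersions is a critical point of the energy $$E_{G^A}(c)=\tfrac12\int_a^b\!\!\int_{S^1}(1+A\kappa_{c(t)}^2)\langle c_t,c_t\rangle|c_\theta|\,d\theta\,dt$$ with respect to all smooth variations with fixed endpoints $c(a,\cdot),c(b,\cdot)$ if and only if $$\big((1+A\kappa^2)|c_\theta|\,c_t\big)_t=\Big(\frac{-1+A\kappa^2}{2}\,\frac{|c_t|^2}{|c_\theta|}\,c_\theta+A\,\frac{(\kappa|c_t|^2)_\theta}{|c_\theta|^2}\,ic_\theta\Big)_\theta,$$ where $\kappa=\kappa_{c(t)}(\theta)$.
   Context: $S^1=\mathbb R/2\pi\mathbb Z$, $\mathbb R^2\cong\mathbb C$ (so $i$ denotes rotation by $\pi/2$). Subscripts denote partial derivatives. $\kappa_c=\det(c_\theta,c_{\theta\theta})/|c_\theta|^3$ is the curvature of the immersion $c$. *)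

theory Defs
  imports "HOL-Analysis.Analysis"
begin

text \<open>C-infinity smoothness of a function of two real variables on a set S
  (here S = [a,b] x R), via one-sided (within S) derivatives: f is smooth iff it is
  Frechet differentiable on S with partial derivatives g1, g2 that are again smooth.\<close>
coinductive smooth_on :: "(real \<times> real) set \<Rightarrow> (real \<times> real \<Rightarrow> 'a::real_normed_vector) \<Rightarrow> bool"
  for S where
  "(\<And>x. x \<in> S \<Longrightarrow> (f has_derivative (\<lambda>(u, v). u *\<^sub>R g1 x + v *\<^sub>R g2 x)) (at x within S))
   \<Longrightarrow> smooth_on S g1 \<Longrightarrow> smooth_on S g2 \<Longrightarrow> smooth_on S f"

text \<open>Paths c : [a,b] x S^1 -> C are represented as curried maps c t \<theta>, 2pi-periodic in \<theta>.\<close>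
definition smooth_path :: "real \<Rightarrow> real \<Rightarrow> (real \<Rightarrow> real \<Rightarrow> complex) \<Rightarrow> bool" where
  "smooth_path a b c \<longleftrightarrow> smooth_on ({a..b} \<times> UNIV) (\<lambda>(t, \<theta>). c t \<theta>)
      \<and> (\<forall>t\<in>{a..b}. \<forall>\<theta>. c t (\<theta> + 2 * pi) = c t \<theta>)"

definition dT :: "real \<Rightarrow> real \<Rightarrow> (real \<Rightarrow> real \<Rightarrow> 'a::real_normed_vector) \<Rightarrow> real \<Rightarrow> real \<Rightarrow> 'a" where
  "dT a b f t \<theta> = vector_derivative (\<lambda>s. f s \<theta>) (at t within {a..b})"

definition dTh :: "(real \<Rightarrow> real \<Rightarrow> 'a::real_normed_vector) \<Rightarrow> real \<Rightarrow> real \<Rightarrow> 'a" where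
  "dTh f t \<theta> = vector_derivative (\<lambda>\<phi>. f t \<phi>) (at \<theta>)"

definition immersion_path :: "real \<Rightarrow> real \<Rightarrow> (real \<Rightarrow> real \<Rightarrow> complex) \<Rightarrow> bool" where
  "immersion_path a b c \<longleftrightarrow> (\<forall>t\<in>{a..b}. \<forall>\<theta>. dTh c t \<theta> \<noteq> 0)"

definition det2 :: "complex \<Rightarrow> complex \<Rightarrow> real" where
  "det2 z w = Re z * Im w - Im z * Re w"

definition curv :: "(real \<Rightarrow> real \<Rightarrow> complex) \<Rightarrow> real \<Rightarrow> real \<Rightarrow> real" where
  "curv c t \<theta> = det2 (dTh c t \<theta>) (dTh (dTh c) t \<theta>) / cmod (dTh c t \<theta>) ^ 3"

definition energy :: "real \<Rightarrow> real \<Rightarrow> real \<Rightarrow> (real \<Rightarrow> real \<Rightarrow> complex) \<Rightarrow> real" where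
  "energy A a b c = 1/2 * integral {a..b} (\<lambda>t. integral {0..2*pi} (\<lambda>\<theta>.
      (1 + A * (curv c t \<theta>)\<^sup>2) * (cmod (dT a b c t \<theta>))\<^sup>2 * cmod (dTh c t \<theta>)))"

definition admissible_variation :: "real \<Rightarrow> real \<Rightarrow> (real \<Rightarrow> real \<Rightarrow> complex) \<Rightarrow> bool" where
  "admissible_variation a b h \<longleftrightarrow> smooth_path a b h \<and> (\<forall>\<theta>. h a \<theta> = 0 \<and> h b \<theta> = 0)"

definition critical_point :: "real \<Rightarrow> real \<Rightarrow> real \<Rightarrow> (real \<Rightarrow> real \<Rightarrow> complex) \<Rightarrow> bool" where
  "critical_point A a b c \<longleftrightarrow> (\<forall>h. admissible_variation a b h \<longrightarrow>
      ((\<lambda>s. energy A a b (\<lambda>t \<theta>. c t \<theta> + of_real s * h t \<theta>)) has_real_derivative 0) (at 0))"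

definition geodesic_eq :: "real \<Rightarrow> real \<Rightarrow> real \<Rightarrow> (real \<Rightarrow> real \<Rightarrow> complex) \<Rightarrow> bool" where
  "geodesic_eq A a b c \<longleftrightarrow> (\<forall>t\<in>{a..b}. \<forall>\<theta>.
     dT a b (\<lambda>t \<theta>. of_real ((1 + A * (curv c t \<theta>)\<^sup>2) * cmod (dTh c t \<theta>)) * dT a b c t \<theta>) t \<theta>
   = dTh (\<lambda>t \<theta>. of_real ((-1 + A * (curv c t \<theta>)\<^sup>2) / 2 * (cmod (dT a b c t \<theta>))\<^sup>2 / cmod (dTh c t \<theta>))
                   * dTh c t \<theta>
              + of_real (A * dTh (\<lambda>t \<theta>. curv c t \<theta> * (cmod (dT a b c t \<theta>))\<^sup>2) t \<theta>
                          / (cmod (dTh c t \<theta>))\<^sup>2) * (\<i> * dTh c t \<theta>)) t \<theta>)"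

end

theory Submission
  imports Defs
begin

lemma coind_step:
  assumes "\<forall>x\<in>S. (f has_derivative (\<lambda>(u, v). u *\<^sub>R g1 x + v *\<^sub>R g2 x)) (at x within S)"
    "X g1 \<or> smooth_on S g1" "X g2 \<or> smooth_on S g2"
  shows "\<exists>f' g1 g2. f = f' \<and> (\<forall>x. x \<in> S \<longrightarrow> (f' has_derivative (\<lambda>(u, v). u *\<^sub>R g1 x + v *\<^sub>R g2 x)) (at x within S))
     \<and> (X g1 \<or> smooth_on S g1) \<and> (X g2 \<or> smooth_on S g2)"
  using assms by blast

lemma smooth_on_D:
  assumes "smooth_on S f"
  obtains g1 g2 where "\<And>x. x \<in> S \<Longrightarrow> (f has_derivative (\<lambda>(u, v). u *\<^sub>R g1 x + v *\<^sub>R g2 x)) (at x within S)"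
    "smooth_on S g1" "smooth_on S g2"
  using assms by (cases rule: smooth_on.cases) blast

lemma smooth_on_cont:
  assumes "smooth_on S f" shows "continuous_on S f"
proof -
  obtain g1 g2 where d: "\<And>x. x \<in> S \<Longrightarrow> (f has_derivative (\<lambda>(u, v). u *\<^sub>R g1 x + v *\<^sub>R g2 x)) (at x within S)"
    using smooth_on_D[OF assms] by blast
  show ?thesis unfolding continuous_on_eq_continuous_within
    using d has_derivative_continuous by blast
qed

lemma smooth_on_cong:
  assumes "smooth_on S f" "\<And>x. x \<in> S \<Longrightarrow> g x = f x" shows "smooth_on S g"
  using assms
proof (coinduction arbitrary: f g)
  case (smooth_on f g)
  from smooth_on_D[OF smooth_on(1)] obtain g1 g2 where
    d: "\<And>x. x \<in> S \<Longrightarrow> (f has_derivative (\<lambda>(u, v). u *\<^sub>R g1 x + v *\<^sub>R g2 x)) (at x within S)"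
    and s: "smooth_on S g1" "smooth_on S g2" by blast
  have "\<forall>x\<in>S. (g has_derivative (\<lambda>(u, v). u *\<^sub>R g1 x + v *\<^sub>R g2 x)) (at x within S)"
  proof
    fix x assume x: "x \<in> S"
    show "(g has_derivative (\<lambda>(u, v). u *\<^sub>R g1 x + v *\<^sub>R g2 x)) (at x within S)"
      by (rule has_derivative_transform_within[OF d[OF x] zero_less_one x]) (simp add: smooth_on(2))
  qed
  then show ?case using s by (intro coind_step) auto
qed

lemma smooth_on_const: "smooth_on S (\<lambda>x. k)"
proof (coinduction arbitrary: k)
  case (smooth_on k)
  have e: "(\<lambda>(u, v). u *\<^sub>R (0::'a) + v *\<^sub>R 0) = (\<lambda>_. 0)" by auto
  have "\<forall>x\<in>S. ((\<lambda>x. k) has_derivative (\<lambda>(u, v). u *\<^sub>R (\<lambda>_. 0::'a) x + v *\<^sub>R (\<lambda>_. 0) x)) (at x within S)"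
    by (simp only: e) (simp add: has_derivative_const)
  then show ?case by (rule coind_step) auto
qed

lemma smooth_on_linear:
  assumes "bounded_linear L" "smooth_on S f" shows "smooth_on S (\<lambda>x. L (f x))"
  using assms(2)
proof (coinduction arbitrary: f)
  case (smooth_on f)
  from smooth_on_D[OF smooth_on(1)] obtain g1 g2 where
    d: "\<And>x. x \<in> S \<Longrightarrow> (f has_derivative (\<lambda>(u, v). u *\<^sub>R g1 x + v *\<^sub>R g2 x)) (at x within S)"
    and s: "smooth_on S g1" "smooth_on S g2" by blast
  have "\<forall>x\<in>S. ((\<lambda>x. L (f x)) has_derivative (\<lambda>(u, v). u *\<^sub>R L (g1 x) + v *\<^sub>R L (g2 x))) (at x within S)"
  proof
    fix x assume "x \<in> S"
    from bounded_linear.has_derivative[OF assms(1) d[OF this]]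
    show "((\<lambda>x. L (f x)) has_derivative (\<lambda>(u, v). u *\<^sub>R L (g1 x) + v *\<^sub>R L (g2 x))) (at x within S)"
      by (simp add: case_prod_beta' linear_add[OF bounded_linear.linear[OF assms(1)]]
            linear_scale[OF bounded_linear.linear[OF assms(1)]])
  qed
  then show ?case using s by (intro coind_step) auto
qed

lemma smooth_on_add:
  assumes "smooth_on S f" "smooth_on S g" shows "smooth_on S (\<lambda>x. f x + g x)"
  using assms
proof (coinduction arbitrary: f g)
  case (smooth_on f g)
  from smooth_on_D[OF smooth_on(1)] obtain f1 f2 where
    df: "\<And>x. x \<in> S \<Longrightarrow> (f has_derivative (\<lambda>(u, v). u *\<^sub>R f1 x + v *\<^sub>R f2 x)) (at x within S)"
    and sf: "smooth_on S f1" "smooth_on S f2" by blast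
  from smooth_on_D[OF smooth_on(2)] obtain g1 g2 where
    dg: "\<And>x. x \<in> S \<Longrightarrow> (g has_derivative (\<lambda>(u, v). u *\<^sub>R g1 x + v *\<^sub>R g2 x)) (at x within S)"
    and sg: "smooth_on S g1" "smooth_on S g2" by blast
  have "\<forall>x\<in>S. ((\<lambda>x. f x + g x) has_derivative (\<lambda>(u, v). u *\<^sub>R (f1 x + g1 x) + v *\<^sub>R (f2 x + g2 x))) (at x within S)"
  proof
    fix x assume "x \<in> S"
    from has_derivative_add[OF df[OF this] dg[OF this]]
    show "((\<lambda>x. f x + g x) has_derivative (\<lambda>(u, v). u *\<^sub>R (f1 x + g1 x) + v *\<^sub>R (f2 x + g2 x))) (at x within S)"
      by (simp add: case_prod_beta' scaleR_right_distrib algebra_simps)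
  qed
  then show ?case using sf sg by (intro coind_step) auto
qed

inductive SP :: "(real \<times> real) set \<Rightarrow> (real \<times> real \<Rightarrow> 'a::real_normed_algebra) \<Rightarrow> bool" for S where
  SP_prod: "smooth_on S f \<Longrightarrow> smooth_on S g \<Longrightarrow> SP S (\<lambda>x. f x * g x)"
| SP_add: "SP S p \<Longrightarrow> SP S q \<Longrightarrow> SP S (\<lambda>x. p x + q x)"

lemma SP_deriv:
  assumes "SP S p"
  shows "\<exists>p1 p2. (\<forall>x\<in>S. (p has_derivative (\<lambda>(u, v). u *\<^sub>R p1 x + v *\<^sub>R p2 x)) (at x within S)) \<and> SP S p1 \<and> SP S p2"
  using assms
proof induction
  case (SP_prod f g)
  from smooth_on_D[OF SP_prod(1)] obtain f1 f2 where
    df: "\<And>x. x \<in> S \<Longrightarrow> (f has_derivative (\<lambda>(u, v). u *\<^sub>R f1 x + v *\<^sub>R f2 x)) (at x within S)"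
    and sf: "smooth_on S f1" "smooth_on S f2" by blast
  from smooth_on_D[OF SP_prod(2)] obtain g1 g2 where
    dg: "\<And>x. x \<in> S \<Longrightarrow> (g has_derivative (\<lambda>(u, v). u *\<^sub>R g1 x + v *\<^sub>R g2 x)) (at x within S)"
    and sg: "smooth_on S g1" "smooth_on S g2" by blast
  define p1 where "p1 = (\<lambda>x. f x * g1 x + f1 x * g x)"
  define p2 where "p2 = (\<lambda>x. f x * g2 x + f2 x * g x)"
  have "\<forall>x\<in>S. ((\<lambda>x. f x * g x) has_derivative (\<lambda>(u, v). u *\<^sub>R p1 x + v *\<^sub>R p2 x)) (at x within S)"
  proof
    fix x assume "x \<in> S"
    from has_derivative_mult[OF df[OF this] dg[OF this]]
    show "((\<lambda>x. f x * g x) has_derivative (\<lambda>(u, v). u *\<^sub>R p1 x + v *\<^sub>R p2 x)) (at x within S)"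
      unfolding p1_def p2_def
      by (simp add: case_prod_beta' scaleR_right_distrib distrib_left distrib_right algebra_simps)
  qed
  moreover have "SP S p1" "SP S p2"
    unfolding p1_def p2_def using SP_prod sf sg by (auto intro!: SP.intros)
  ultimately show ?case by blast
next
  case (SP_add p q)
  then obtain p1 p2 q1 q2 where
    dp: "\<forall>x\<in>S. (p has_derivative (\<lambda>(u, v). u *\<^sub>R p1 x + v *\<^sub>R p2 x)) (at x within S)" "SP S p1" "SP S p2"
    and dq: "\<forall>x\<in>S. (q has_derivative (\<lambda>(u, v). u *\<^sub>R q1 x + v *\<^sub>R q2 x)) (at x within S)" "SP S q1" "SP S q2"
    by blast
  define r1 where "r1 = (\<lambda>x. p1 x + q1 x)"
  define r2 where "r2 = (\<lambda>x. p2 x + q2 x)"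
  have "\<forall>x\<in>S. ((\<lambda>x. p x + q x) has_derivative (\<lambda>(u, v). u *\<^sub>R r1 x + v *\<^sub>R r2 x)) (at x within S)"
  proof
    fix x assume x: "x \<in> S"
    from has_derivative_add[OF dp(1)[rule_format, OF x] dq(1)[rule_format, OF x]]
    show "((\<lambda>x. p x + q x) has_derivative (\<lambda>(u, v). u *\<^sub>R r1 x + v *\<^sub>R r2 x)) (at x within S)"
      unfolding r1_def r2_def by (simp add: case_prod_beta' scaleR_right_distrib algebra_simps)
  qed
  moreover have "SP S r1" "SP S r2"
    unfolding r1_def r2_def using dp dq by (auto intro!: SP.intros)
  ultimately show ?case by blast
qed

lemma SP_smooth: assumes "SP S p" shows "smooth_on S p"
  using assms
proof (coinduction arbitrary: p)
  case (smooth_on p)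
  then show ?case using SP_deriv[OF smooth_on] by (metis coind_step)
qed

lemma smooth_on_mult:
  fixes f g :: "real \<times> real \<Rightarrow> 'a::real_normed_algebra"
  assumes "smooth_on S f" "smooth_on S g" shows "smooth_on S (\<lambda>x. f x * g x)"
  by (rule SP_smooth) (rule SP_prod[OF assms])

lemma smooth_on_neg: "smooth_on S f \<Longrightarrow> smooth_on S (\<lambda>x. - f x)"
  using smooth_on_linear[of uminus S f] bounded_linear_minus[OF bounded_linear_ident] by simp

lemma smooth_on_diff: "smooth_on S f \<Longrightarrow> smooth_on S g \<Longrightarrow> smooth_on S (\<lambda>x. f x - g x)"
  using smooth_on_add[OF _ smooth_on_neg, of S f g] by simp

lemma smooth_on_cmult:
  fixes f :: "real \<times> real \<Rightarrow> 'a::real_normed_algebra"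
  shows "smooth_on S f \<Longrightarrow> smooth_on S (\<lambda>x. k * f x)"
  using smooth_on_mult[OF smooth_on_const] by blast

lemma smooth_on_Re: "smooth_on S f \<Longrightarrow> smooth_on S (\<lambda>x. Re (f x))"
  by (rule smooth_on_linear[OF bounded_linear_Re])
lemma smooth_on_Im: "smooth_on S f \<Longrightarrow> smooth_on S (\<lambda>x. Im (f x))"
  by (rule smooth_on_linear[OF bounded_linear_Im])
lemma smooth_on_of_real: "smooth_on S f \<Longrightarrow> smooth_on S (\<lambda>x. complex_of_real (f x))"
  by (rule smooth_on_linear[OF bounded_linear_of_real])
lemma smooth_on_cnj: "smooth_on S f \<Longrightarrow> smooth_on S (\<lambda>x. cnj (f x))"
  by (rule smooth_on_linear[OF bounded_linear_cnj])

lemma smooth_on_power: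
  fixes f :: "real \<times> real \<Rightarrow> 'a::{real_normed_algebra_1}"
  shows "smooth_on S f \<Longrightarrow> smooth_on S (\<lambda>x. f x ^ n)"
  by (induction n) (auto intro: smooth_on_const smooth_on_mult)

lemma inv_pow_deriv:
  fixes f g :: "real \<times> real \<Rightarrow> real"
  assumes f: "(f has_derivative F') (at x within S)" and g: "(g has_derivative G') (at x within S)"
    and nz: "f x \<noteq> 0"
  shows "((\<lambda>x. g x * inverse (f x) ^ n) has_derivative
     (\<lambda>h. (G' h * f x - real n * g x * F' h) * inverse (f x) ^ Suc n)) (at x within S)"
proof -
  have "((\<lambda>x. g x * inverse (f x) ^ n) has_derivative
     (\<lambda>h. g x * (of_nat n * (- (inverse (f x) * F' h * inverse (f x))) * inverse (f x) ^ (n - 1)) + G' h * inverse (f x) ^ n)) (at x within S)"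
    by (intro has_derivative_mult has_derivative_power Deriv.has_derivative_inverse f g nz)
  moreover have "(\<lambda>h. g x * (of_nat n * (- (inverse (f x) * F' h * inverse (f x))) * inverse (f x) ^ (n - 1)) + G' h * inverse (f x) ^ n)
     = (\<lambda>h. (G' h * f x - real n * g x * F' h) * inverse (f x) ^ Suc n)"
  proof
    fix h show "g x * (of_nat n * (- (inverse (f x) * F' h * inverse (f x))) * inverse (f x) ^ (n - 1)) + G' h * inverse (f x) ^ n
     = (G' h * f x - real n * g x * F' h) * inverse (f x) ^ Suc n"
    proof (cases n)
      case 0 then show ?thesis using nz by (simp add: field_simps)
    next
      case (Suc m) then show ?thesis using nz by (simp add: field_simps)
    qed
  qed
  ultimately show ?thesis by simp
qed

lemma smooth_on_inv_pow:
  fixes f g :: "real \<times> real \<Rightarrow> real"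
  assumes f: "smooth_on S f" and nz: "\<And>x. x \<in> S \<Longrightarrow> f x \<noteq> 0" and g: "smooth_on S g"
  shows "smooth_on S (\<lambda>x. g x * inverse (f x) ^ n)"
  using g
proof (coinduction arbitrary: g n)
  case (smooth_on g n)
  from smooth_on_D[OF f] obtain f1 f2 where
    df: "\<And>x. x \<in> S \<Longrightarrow> (f has_derivative (\<lambda>(u, v). u *\<^sub>R f1 x + v *\<^sub>R f2 x)) (at x within S)"
    and sf: "smooth_on S f1" "smooth_on S f2" by blast
  from smooth_on_D[OF smooth_on] obtain g1 g2 where
    dg: "\<And>x. x \<in> S \<Longrightarrow> (g has_derivative (\<lambda>(u, v). u *\<^sub>R g1 x + v *\<^sub>R g2 x)) (at x within S)"
    and sg: "smooth_on S g1" "smooth_on S g2" by blast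
  define k1 where "k1 = (\<lambda>x. g1 x * f x - real n * g x * f1 x)"
  define k2 where "k2 = (\<lambda>x. g2 x * f x - real n * g x * f2 x)"
  define p1 where "p1 = (\<lambda>x. k1 x * inverse (f x) ^ Suc n)"
  define p2 where "p2 = (\<lambda>x. k2 x * inverse (f x) ^ Suc n)"
  have "\<forall>x\<in>S. ((\<lambda>x. g x * inverse (f x) ^ n) has_derivative (\<lambda>(u, v). u *\<^sub>R p1 x + v *\<^sub>R p2 x)) (at x within S)"
  proof
    fix x assume x: "x \<in> S"
    from inv_pow_deriv[OF df[OF x] dg[OF x] nz[OF x], of n]
    show "((\<lambda>x. g x * inverse (f x) ^ n) has_derivative (\<lambda>(u, v). u *\<^sub>R p1 x + v *\<^sub>R p2 x)) (at x within S)"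
      unfolding p1_def p2_def k1_def k2_def
      by (simp add: case_prod_beta' algebra_simps)
  qed
  moreover have "smooth_on S k1" "smooth_on S k2" unfolding k1_def k2_def
    using sf sg f smooth_on
    by (auto intro!: smooth_on_diff smooth_on_mult smooth_on_const)
  moreover have "\<exists>g m. p1 = (\<lambda>x. g x * inverse (f x) ^ m) \<and> smooth_on S g"
    "\<exists>g m. p2 = (\<lambda>x. g x * inverse (f x) ^ m) \<and> smooth_on S g"
    unfolding p1_def p2_def using calculation(2,3) by blast+
  ultimately show ?case by (intro coind_step[where ?g1.0=p1 and ?g2.0=p2]) blast+
qed

lemma smooth_on_inverse:
  fixes f :: "real \<times> real \<Rightarrow> real"
  assumes f: "smooth_on S f" and nz: "\<And>x. x \<in> S \<Longrightarrow> f x \<noteq> 0"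
  shows "smooth_on S (\<lambda>x. inverse (f x))"
  using smooth_on_inv_pow[OF f nz smooth_on_const, of 1 1] by simp

lemma sqrt_alg:
  fixes y z G g Fp :: real
  assumes i: "inverse y * z = y"
  shows "(G * y + g * (Fp * (inverse y / 2))) * z - n * (g * y) * Fp = (G * z + (1/2 - n) * g * Fp) * y"
proof -
  have "g * (Fp * (inverse y / 2)) * z = g * Fp * (inverse y * z) / 2" by (simp add: ac_simps)
  also have "\<dots> = g * Fp * y / 2" by (simp only: i)
  finally have e: "g * (Fp * (inverse y / 2)) * z = g * Fp * y / 2" .
  have "(G * y + g * (Fp * (inverse y / 2))) * z - n * (g * y) * Fp = G * y * z + g * Fp * y / 2 - n * (g * y) * Fp"
    by (simp only: distrib_right e)
  also have "\<dots> = (G * z + (1/2 - n) * g * Fp) * y" by (simp add: algebra_simps)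
  finally show ?thesis .
qed

lemma sqrt_deriv:
  fixes F g :: "real \<times> real \<Rightarrow> real"
  assumes f: "(F has_derivative F') (at x within S)" and g: "(g has_derivative G') (at x within S)"
    and pos: "F x > 0"
  shows "((\<lambda>x. g x * sqrt (F x) * inverse (F x) ^ n) has_derivative
     (\<lambda>h. (G' h * F x + (1/2 - real n) * g x * F' h) * sqrt (F x) * inverse (F x) ^ Suc n)) (at x within S)"
proof -
  have nz: "F x \<noteq> 0" using pos by simp
  have "((\<lambda>x. (g x * sqrt (F x)) * inverse (F x) ^ n) has_derivative
     (\<lambda>h. ((G' h * sqrt (F x) + g x * (F' h * (inverse (sqrt (F x)) / 2))) * F x - real n * (g x * sqrt (F x)) * F' h) * inverse (F x) ^ Suc n)) (at x within S)"
    apply (rule inv_pow_deriv[OF f _ nz])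
    apply (rule has_derivative_eq_rhs)
     apply (rule has_derivative_mult[OF g has_derivative_real_sqrt[OF pos f]])
    by (simp add: algebra_simps)
  moreover have "(\<lambda>h. ((G' h * sqrt (F x) + g x * (F' h * (inverse (sqrt (F x)) / 2))) * F x - real n * (g x * sqrt (F x)) * F' h) * inverse (F x) ^ Suc n)
    = (\<lambda>h. (G' h * F x + (1/2 - real n) * g x * F' h) * sqrt (F x) * inverse (F x) ^ Suc n)"
  proof
    fix h
    have sp: "sqrt (F x) > 0" using pos by simp
    have i: "inverse (sqrt (F x)) * F x = sqrt (F x)" using pos by (simp add: field_simps)
    show "((G' h * sqrt (F x) + g x * (F' h * (inverse (sqrt (F x)) / 2))) * F x - real n * (g x * sqrt (F x)) * F' h) * inverse (F x) ^ Suc n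
      = (G' h * F x + (1/2 - real n) * g x * F' h) * sqrt (F x) * inverse (F x) ^ Suc n"
      using sqrt_alg[OF i] by simp
  qed
  ultimately show ?thesis by (simp add: mult.assoc)
qed

lemma smooth_on_sqrt_gen:
  fixes F g :: "real \<times> real \<Rightarrow> real"
  assumes f: "smooth_on S F" and pos: "\<And>x. x \<in> S \<Longrightarrow> F x > 0" and g: "smooth_on S g"
  shows "smooth_on S (\<lambda>x. g x * sqrt (F x) * inverse (F x) ^ n)"
  using g
proof (coinduction arbitrary: g n)
  case (smooth_on g n)
  from smooth_on_D[OF f] obtain f1 f2 where
    df: "\<And>x. x \<in> S \<Longrightarrow> (F has_derivative (\<lambda>(u, v). u *\<^sub>R f1 x + v *\<^sub>R f2 x)) (at x within S)"
    and sf: "smooth_on S f1" "smooth_on S f2" by blast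
  from smooth_on_D[OF smooth_on] obtain g1 g2 where
    dg: "\<And>x. x \<in> S \<Longrightarrow> (g has_derivative (\<lambda>(u, v). u *\<^sub>R g1 x + v *\<^sub>R g2 x)) (at x within S)"
    and sg: "smooth_on S g1" "smooth_on S g2" by blast
  define k1 where "k1 = (\<lambda>x. g1 x * F x + (1/2 - real n) * g x * f1 x)"
  define k2 where "k2 = (\<lambda>x. g2 x * F x + (1/2 - real n) * g x * f2 x)"
  define p1 where "p1 = (\<lambda>x. k1 x * sqrt (F x) * inverse (F x) ^ Suc n)"
  define p2 where "p2 = (\<lambda>x. k2 x * sqrt (F x) * inverse (F x) ^ Suc n)"
  have "\<forall>x\<in>S. ((\<lambda>x. g x * sqrt (F x) * inverse (F x) ^ n) has_derivative (\<lambda>(u, v). u *\<^sub>R p1 x + v *\<^sub>R p2 x)) (at x within S)"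
  proof
    fix x assume x: "x \<in> S"
    from sqrt_deriv[OF df[OF x] dg[OF x] pos[OF x], of n]
    show "((\<lambda>x. g x * sqrt (F x) * inverse (F x) ^ n) has_derivative (\<lambda>(u, v). u *\<^sub>R p1 x + v *\<^sub>R p2 x)) (at x within S)"
      unfolding p1_def p2_def k1_def k2_def
      by (simp add: case_prod_beta' algebra_simps)
  qed
  moreover have "smooth_on S k1" "smooth_on S k2" unfolding k1_def k2_def
    using sf sg f smooth_on
    by (auto intro!: smooth_on_add smooth_on_mult smooth_on_const)
  moreover have "\<exists>g m. p1 = (\<lambda>x. g x * sqrt (F x) * inverse (F x) ^ m) \<and> smooth_on S g"
    "\<exists>g m. p2 = (\<lambda>x. g x * sqrt (F x) * inverse (F x) ^ m) \<and> smooth_on S g"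
    unfolding p1_def p2_def using calculation(2,3) by blast+
  ultimately show ?case by (intro coind_step[where ?g1.0=p1 and ?g2.0=p2]) blast+
qed

lemma smooth_on_sqrt:
  fixes F :: "real \<times> real \<Rightarrow> real"
  assumes f: "smooth_on S F" and pos: "\<And>x. x \<in> S \<Longrightarrow> F x > 0"
  shows "smooth_on S (\<lambda>x. sqrt (F x))"
  using smooth_on_sqrt_gen[OF f pos smooth_on_const, of 1 0] by simp

lemma smooth_on_cmod:
  fixes f :: "real \<times> real \<Rightarrow> complex"
  assumes f: "smooth_on S f" and nz: "\<And>x. x \<in> S \<Longrightarrow> f x \<noteq> 0"
  shows "smooth_on S (\<lambda>x. cmod (f x))"
proof -
  have "smooth_on S (\<lambda>x. sqrt ((Re (f x))\<^sup>2 + (Im (f x))\<^sup>2))"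
  proof (rule smooth_on_sqrt)
    show "smooth_on S (\<lambda>x. (Re (f x))\<^sup>2 + (Im (f x))\<^sup>2)"
      by (intro smooth_on_add smooth_on_power smooth_on_Re smooth_on_Im f)
    fix x assume "x \<in> S"
    then have "f x \<noteq> 0" by (rule nz)
    then show "(Re (f x))\<^sup>2 + (Im (f x))\<^sup>2 > 0"
      by (metis complex_neq_0)
  qed
  then show ?thesis by (simp add: cmod_def)
qed


lemma partials_aux:
  fixes f :: "real \<Rightarrow> real \<Rightarrow> 'a::real_normed_vector"
  assumes ab: "a < b" and sm: "smooth_on ({a..b} \<times> UNIV) (\<lambda>x. f (fst x) (snd x))"
  obtains g1 g2 where
    "\<And>t \<theta>. t \<in> {a..b} \<Longrightarrow> ((\<lambda>s. f s \<theta>) has_vector_derivative g1 (t, \<theta>)) (at t within {a..b})"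
    "\<And>t \<theta>. t \<in> {a..b} \<Longrightarrow> ((\<lambda>\<phi>. f t \<phi>) has_vector_derivative g2 (t, \<theta>)) (at \<theta>)"
    "smooth_on ({a..b} \<times> UNIV) g1" "smooth_on ({a..b} \<times> UNIV) g2"
proof -
  from smooth_on_D[OF sm] obtain g1 g2 where
    d: "\<And>x. x \<in> {a..b} \<times> UNIV \<Longrightarrow> ((\<lambda>x. f (fst x) (snd x)) has_derivative (\<lambda>(u, v). u *\<^sub>R g1 x + v *\<^sub>R g2 x)) (at x within {a..b} \<times> UNIV)"
    and s: "smooth_on ({a..b} \<times> UNIV) g1" "smooth_on ({a..b} \<times> UNIV) g2" by blast
  have 1: "((\<lambda>s. f s \<theta>) has_vector_derivative g1 (t, \<theta>)) (at t within {a..b})" if t: "t \<in> {a..b}" for t \<theta>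
  proof -
    have p: "((\<lambda>s. (s, \<theta>)) has_derivative (\<lambda>y. (y, 0))) (at t within {a..b})"
      by (auto intro!: derivative_eq_intros)
    have "(\<lambda>s. (s, \<theta>)) ` {a..b} \<subseteq> {a..b} \<times> UNIV" by auto
    then have q: "((\<lambda>x. f (fst x) (snd x)) has_derivative (\<lambda>(u, v). u *\<^sub>R g1 (t, \<theta>) + v *\<^sub>R g2 (t, \<theta>))) (at (t, \<theta>) within (\<lambda>s. (s, \<theta>)) ` {a..b})"
      using d[of "(t, \<theta>)"] t by (auto intro: has_derivative_subset)
    from diff_chain_within[OF p, unfolded fst_conv snd_conv, OF q]
    show ?thesis unfolding has_vector_derivative_def by (simp add: o_def)
  qed
  have 2: "((\<lambda>\<phi>. f t \<phi>) has_vector_derivative g2 (t, \<theta>)) (at \<theta>)" if t: "t \<in> {a..b}" for t \<theta>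
  proof -
    have p: "((\<lambda>s. (t, s)) has_derivative (\<lambda>y. (0, y))) (at \<theta> within UNIV)"
      by (auto intro!: derivative_eq_intros)
    have "(\<lambda>s. (t, s)) ` UNIV \<subseteq> {a..b} \<times> UNIV" using t by auto
    then have q: "((\<lambda>x. f (fst x) (snd x)) has_derivative (\<lambda>(u, v). u *\<^sub>R g1 (t, \<theta>) + v *\<^sub>R g2 (t, \<theta>))) (at (t, \<theta>) within (\<lambda>s. (t, s)) ` UNIV)"
      using d[of "(t, \<theta>)"] t by (auto intro: has_derivative_subset)
    from diff_chain_within[OF p, unfolded fst_conv snd_conv, OF q]
    show ?thesis unfolding has_vector_derivative_def by (simp add: o_def)
  qed
  show ?thesis using 1 2 s that by blast
qed

lemma partials:
  fixes f :: "real \<Rightarrow> real \<Rightarrow> 'a::real_normed_vector"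
  assumes ab: "a < b" and sm: "smooth_on ({a..b} \<times> UNIV) (\<lambda>x. f (fst x) (snd x))"
  shows "\<And>t \<theta>. t \<in> {a..b} \<Longrightarrow> ((\<lambda>s. f s \<theta>) has_vector_derivative dT a b f t \<theta>) (at t within {a..b})"
    and "\<And>t \<theta>. t \<in> {a..b} \<Longrightarrow> ((\<lambda>\<phi>. f t \<phi>) has_vector_derivative dTh f t \<theta>) (at \<theta>)"
    and "smooth_on ({a..b} \<times> UNIV) (\<lambda>x. dT a b f (fst x) (snd x))"
    and "smooth_on ({a..b} \<times> UNIV) (\<lambda>x. dTh f (fst x) (snd x))"
proof -
  obtain g1 g2 where
    1: "\<And>t \<theta>. t \<in> {a..b} \<Longrightarrow> ((\<lambda>s. f s \<theta>) has_vector_derivative g1 (t, \<theta>)) (at t within {a..b})"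
    and 2: "\<And>t \<theta>. t \<in> {a..b} \<Longrightarrow> ((\<lambda>\<phi>. f t \<phi>) has_vector_derivative g2 (t, \<theta>)) (at \<theta>)"
    and s: "smooth_on ({a..b} \<times> UNIV) g1" "smooth_on ({a..b} \<times> UNIV) g2"
    using partials_aux[OF ab sm] by blast
  have e1: "dT a b f t \<theta> = g1 (t, \<theta>)" if "t \<in> {a..b}" for t \<theta>
    unfolding dT_def using vector_derivative_within_cbox[OF ab, of t "\<lambda>s. f s \<theta>"] 1[OF that, of \<theta>] that
    by (simp add: cbox_interval)
  have e2: "dTh f t \<theta> = g2 (t, \<theta>)" if "t \<in> {a..b}" for t \<theta>
    unfolding dTh_def using vector_derivative_at 2[OF that, of \<theta>] by blast
  show "\<And>t \<theta>. t \<in> {a..b} \<Longrightarrow> ((\<lambda>s. f s \<theta>) has_vector_derivative dT a b f t \<theta>) (at t within {a..b})"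
    using 1 e1 by simp
  show "\<And>t \<theta>. t \<in> {a..b} \<Longrightarrow> ((\<lambda>\<phi>. f t \<phi>) has_vector_derivative dTh f t \<theta>) (at \<theta>)"
    using 2 e2 by simp
  show "smooth_on ({a..b} \<times> UNIV) (\<lambda>x. dT a b f (fst x) (snd x))"
    by (rule smooth_on_cong[OF s(1)]) (auto simp: e1)
  show "smooth_on ({a..b} \<times> UNIV) (\<lambda>x. dTh f (fst x) (snd x))"
    by (rule smooth_on_cong[OF s(2)]) (auto simp: e2)
qed

lemma periodic_int:
  fixes g :: "real \<Rightarrow> 'a"
  assumes "\<And>\<theta>. g (\<theta> + p) = g \<theta>"
  shows "g (\<theta> + of_int k * p) = g \<theta>"
proof (induction k rule: int_induct[where k=0])
  case base then show ?case by simp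
next
  case (step1 i)
  have "g (\<theta> + of_int (i + 1) * p) = g ((\<theta> + of_int i * p) + p)" by (simp add: algebra_simps)
  also have "\<dots> = g \<theta>" using assms step1 by simp
  finally show ?case .
next
  case (step2 i)
  have "g (\<theta> + of_int i * p) = g ((\<theta> + of_int (i - 1) * p) + p)" by (simp add: algebra_simps)
  then show ?case using assms step2 by simp
qed

lemma periodic_reduce:
  fixes g :: "real \<Rightarrow> 'a"
  assumes "\<And>\<theta>. g (\<theta> + 2 * pi) = g \<theta>"
  obtains \<theta>' where "\<theta>' \<in> {0..2*pi}" "g \<theta> = g \<theta>'"
proof -
  define k where "k = \<lfloor>\<theta> / (2 * pi)\<rfloor>"
  define \<theta>' where "\<theta>' = \<theta> - of_int k * (2 * pi)"
  have "of_int k \<le> \<theta> / (2 * pi)" "\<theta> / (2 * pi) < of_int k + 1" unfolding k_def by linarith+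
  then have "of_int k * (2 * pi) \<le> \<theta>" "\<theta> < (of_int k + 1) * (2 * pi)"
    by (simp_all add: field_simps)
  then have "\<theta>' \<in> {0..2*pi}" unfolding \<theta>'_def by (auto simp: algebra_simps)
  moreover have "g \<theta> = g \<theta>'"
    using periodic_int[of g "2*pi" \<theta>' k, OF assms] unfolding \<theta>'_def by simp
  ultimately show ?thesis using that by blast
qed

lemma periodic_dTh:
  fixes f :: "real \<Rightarrow> real \<Rightarrow> 'a::real_normed_vector"
  assumes per: "\<And>\<phi>. f t (\<phi> + 2 * pi) = f t \<phi>"
    and d: "\<And>\<phi>. ((\<lambda>\<phi>. f t \<phi>) has_vector_derivative dTh f t \<phi>) (at \<phi>)"
  shows "dTh f t (\<theta> + 2 * pi) = dTh f t \<theta>"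
proof -
  have sh: "((\<lambda>\<phi>. \<phi> + 2 * pi) has_vector_derivative 1) (at \<theta>)"
    by (auto intro!: derivative_eq_intros)
  from vector_diff_chain_at[OF sh d[of "\<theta> + 2 * pi"]]
  have "((\<lambda>\<phi>. f t (\<phi> + 2 * pi)) has_vector_derivative dTh f t (\<theta> + 2 * pi)) (at \<theta>)"
    by (simp add: o_def)
  then have "((\<lambda>\<phi>. f t \<phi>) has_vector_derivative dTh f t (\<theta> + 2 * pi)) (at \<theta>)"
    by (simp add: per)
  then show ?thesis using vector_derivative_unique_at d by blast
qed

lemma periodic_dT:
  fixes f :: "real \<Rightarrow> real \<Rightarrow> 'a::real_normed_vector"
  assumes ab: "a < b" and t: "t \<in> {a..b}"
    and per: "\<And>s \<phi>. s \<in> {a..b} \<Longrightarrow> f s (\<phi> + 2 * pi) = f s \<phi>"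
    and d: "\<And>\<phi>. ((\<lambda>s. f s \<phi>) has_vector_derivative dT a b f t \<phi>) (at t within {a..b})"
  shows "dT a b f t (\<theta> + 2 * pi) = dT a b f t \<theta>"
proof -
  have "((\<lambda>s. f s \<theta>) has_vector_derivative dT a b f t (\<theta> + 2 * pi)) (at t within {a..b})"
    by (rule has_vector_derivative_transform_within[OF d[of "\<theta> + 2 * pi"] zero_less_one t]) (simp add: per)
  moreover have "vector_derivative (\<lambda>s. f s \<theta>) (at t within {a..b}) = dT a b f t \<theta>"
    unfolding dT_def ..
  ultimately show ?thesis
    using vector_derivative_within_cbox[OF ab, of t "\<lambda>s. f s \<theta>"] t by (simp add: cbox_interval)
qed

definition Phi :: "real \<Rightarrow> complex \<Rightarrow> complex \<Rightarrow> complex \<Rightarrow> real" where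
  "Phi A u v w = (1 + A * (det2 v w / cmod v ^ 3)\<^sup>2) * (cmod u)\<^sup>2 * cmod v"

definition dPhi :: "real \<Rightarrow> complex \<Rightarrow> complex \<Rightarrow> complex \<Rightarrow> complex \<Rightarrow> complex \<Rightarrow> complex \<Rightarrow> real" where
  "dPhi A u v w du dv dw =
    A * (2 * (det2 v w / cmod v ^ 3) *
       (((det2 dv w + det2 v dw) * cmod v ^ 3 - det2 v w * (3 * cmod v ^ 2 * ((v \<bullet> dv) / cmod v))) / (cmod v ^ 3 * cmod v ^ 3)))
      * (cmod u)\<^sup>2 * cmod v
    + (1 + A * (det2 v w / cmod v ^ 3)\<^sup>2) * (2 * (u \<bullet> du)) * cmod v
    + (1 + A * (det2 v w / cmod v ^ 3)\<^sup>2) * (cmod u)\<^sup>2 * ((v \<bullet> dv) / cmod v)"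

lemma deriv_N:
  fixes v dv :: complex
  assumes nz: "v + of_real s * dv \<noteq> 0"
  shows "((\<lambda>s. cmod (v + of_real s * dv)) has_real_derivative ((v + of_real s * dv) \<bullet> dv) / cmod (v + of_real s * dv)) (at s within U)"
proof -
  define q where "q = (\<lambda>s. (Re v + s * Re dv)\<^sup>2 + (Im v + s * Im dv)\<^sup>2)"
  have e: "\<And>s. cmod (v + of_real s * dv) = sqrt (q s)" unfolding q_def by (simp add: cmod_def)
  have dq: "(q has_real_derivative 2 * ((Re v + s * Re dv) * Re dv + (Im v + s * Im dv) * Im dv)) (at s within U)"
    unfolding q_def by (auto intro!: derivative_eq_intros simp: algebra_simps)
  have pos: "q s > 0" using complex_neq_0[of "v + of_real s * dv"] nz unfolding q_def by simp
  have "((\<lambda>s. sqrt (q s)) has_real_derivative inverse (sqrt (q s)) / 2 * (2 * ((Re v + s * Re dv) * Re dv + (Im v + s * Im dv) * Im dv))) (at s within U)"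
    by (rule DERIV_chain2[OF DERIV_real_sqrt[OF pos] dq])
  moreover have "inverse (sqrt (q s)) / 2 * (2 * ((Re v + s * Re dv) * Re dv + (Im v + s * Im dv) * Im dv))
     = ((v + of_real s * dv) \<bullet> dv) / sqrt (q s)"
    using pos by (simp add: inner_complex_def field_simps)
  ultimately show ?thesis by (simp only: e)
qed

lemma deriv_det:
  fixes v dv w dw :: complex
  shows "((\<lambda>s. det2 (v + of_real s * dv) (w + of_real s * dw)) has_real_derivative
     det2 dv (w + of_real s * dw) + det2 (v + of_real s * dv) dw) (at s within U)"
  unfolding det2_def by (auto intro!: derivative_eq_intros simp: algebra_simps)

lemma deriv_Q:
  fixes u du :: complex
  shows "((\<lambda>s. (cmod (u + of_real s * du))\<^sup>2) has_real_derivative 2 * ((u + of_real s * du) \<bullet> du)) (at s within U)"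
  unfolding cmod_power2 inner_complex_def by (auto intro!: derivative_eq_intros simp: algebra_simps)

lemma deriv_Phi:
  fixes u v w du dv dw :: complex
  assumes nz: "v + of_real s * dv \<noteq> 0"
  shows "((\<lambda>s. Phi A (u + of_real s * du) (v + of_real s * dv) (w + of_real s * dw)) has_real_derivative
     dPhi A (u + of_real s * du) (v + of_real s * dv) (w + of_real s * dw) du dv dw) (at s within U)"
proof -
  let ?V = "\<lambda>s. v + of_real s * dv" and ?W = "\<lambda>s. w + of_real s * dw" and ?U = "\<lambda>s. u + of_real s * du"
  have N: "((\<lambda>s. cmod (?V s)) has_real_derivative (?V s \<bullet> dv) / cmod (?V s)) (at s within U)"
    by (rule deriv_N[OF nz])
  have Nnz: "cmod (?V s) ^ 3 \<noteq> 0" using nz by simp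
  have K: "((\<lambda>s. det2 (?V s) (?W s) / cmod (?V s) ^ 3) has_real_derivative
     ((det2 dv (?W s) + det2 (?V s) dw) * cmod (?V s) ^ 3 - det2 (?V s) (?W s) * (3 * cmod (?V s) ^ 2 * ((?V s \<bullet> dv) / cmod (?V s))))
       / (cmod (?V s) ^ 3 * cmod (?V s) ^ 3)) (at s within U)"
    apply (rule DERIV_cong)
     apply (rule DERIV_divide[OF deriv_det DERIV_power[OF N] Nnz])
    by simp
  have K2: "((\<lambda>s. 1 + A * (det2 (?V s) (?W s) / cmod (?V s) ^ 3)\<^sup>2) has_real_derivative
     A * (2 * (det2 (?V s) (?W s) / cmod (?V s) ^ 3) *
       (((det2 dv (?W s) + det2 (?V s) dw) * cmod (?V s) ^ 3 - det2 (?V s) (?W s) * (3 * cmod (?V s) ^ 2 * ((?V s \<bullet> dv) / cmod (?V s))))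
       / (cmod (?V s) ^ 3 * cmod (?V s) ^ 3)))) (at s within U)"
    apply (rule DERIV_cong)
     apply (rule DERIV_add[OF DERIV_const DERIV_cmult[OF DERIV_power[OF K]]])
    by (simp add: algebra_simps)
  have P: "((\<lambda>s. (1 + A * (det2 (?V s) (?W s) / cmod (?V s) ^ 3)\<^sup>2) * (cmod (?U s))\<^sup>2 * cmod (?V s)) has_real_derivative
     dPhi A (?U s) (?V s) (?W s) du dv dw) (at s within U)"
    apply (rule DERIV_cong)
     apply (rule DERIV_mult[OF DERIV_mult[OF K2 deriv_Q] N])
    unfolding dPhi_def by (simp add: algebra_simps)
  then show ?thesis unfolding Phi_def .
qed

lemma inner_i_left: "(\<i> * w) \<bullet> z = - det2 z w"
  by (simp add: inner_complex_def det2_def algebra_simps)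
lemma inner_i_left2: "(\<i> * v) \<bullet> z = det2 v z"
  by (simp add: inner_complex_def det2_def algebra_simps)
lemma inner_ofreal_left: "(complex_of_real r * z) \<bullet> y = r * (z \<bullet> y)"
  by (simp add: inner_complex_def algebra_simps)

lemma dPhi_zero:
  fixes u v w du dv dw :: complex
  assumes nz: "v \<noteq> 0"
  defines "L \<equiv> cmod v"
  defines "\<kappa> \<equiv> det2 v w / cmod v ^ 3"
  shows "dPhi A u v w du dv dw / 2 =
      (complex_of_real ((1 + A * \<kappa>\<^sup>2) * L) * u) \<bullet> du
    + (complex_of_real ((1 + A * \<kappa>\<^sup>2) / 2 * (cmod u)\<^sup>2 / L - 3 * A * (\<kappa> * (cmod u)\<^sup>2) * \<kappa> / L) * v
        - complex_of_real (A * (\<kappa> * (cmod u)\<^sup>2) / L\<^sup>2) * (\<i> * w)) \<bullet> dv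
    + (complex_of_real (A * (\<kappa> * (cmod u)\<^sup>2) / L\<^sup>2) * (\<i> * v)) \<bullet> dw"
proof -
  have L: "L \<noteq> 0" using nz unfolding L_def by simp
  have sw: "det2 dw v = - det2 v dw" by (simp add: det2_def)
  have "det2 v w = \<kappa> * L ^ 3" unfolding \<kappa>_def L_def using nz by simp
  show ?thesis
    unfolding inner_diff_left inner_ofreal_left inner_i_left inner_i_left2
    unfolding dPhi_def L_def[symmetric] \<kappa>_def[symmetric] using L \<open>det2 v w = \<kappa> * L ^ 3\<close>
    by (simp add: sw field_simps power2_eq_square power3_eq_cube)
qed


lemma key_identity:
  fixes u v w :: complex and A W\<theta> :: real
  assumes nz: "v \<noteq> 0"
  defines "L \<equiv> cmod v"
  defines "\<kappa> \<equiv> det2 v w / cmod v ^ 3"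
  defines "Wf \<equiv> \<kappa> * (cmod u)\<^sup>2"
  shows "(complex_of_real ((1 + A * \<kappa>\<^sup>2) / 2 * (cmod u)\<^sup>2 / L - 3 * A * Wf * \<kappa> / L) * v
        - complex_of_real (A * Wf / L\<^sup>2) * (\<i> * w))
       - (complex_of_real (A * (W\<theta> * L\<^sup>2 - Wf * (2 * (v \<bullet> w))) / (L\<^sup>2 * L\<^sup>2)) * (\<i> * v)
          + complex_of_real (A * Wf / L\<^sup>2) * (\<i> * w))
     = - (complex_of_real ((-1 + A * \<kappa>\<^sup>2) / 2 * (cmod u)\<^sup>2 / L) * v
          + complex_of_real (A * W\<theta> / L\<^sup>2) * (\<i> * v))"
proof -
  have L: "L \<noteq> 0" using nz unfolding L_def by simp
  have L2: "L\<^sup>2 = (Re v)\<^sup>2 + (Im v)\<^sup>2" unfolding L_def by (simp add: cmod_power2)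
  have d: "det2 v w = \<kappa> * L ^ 3" unfolding \<kappa>_def L_def using nz by simp
  have core: "complex_of_real (det2 v w) * v + complex_of_real (L\<^sup>2) * (\<i> * w) - complex_of_real (v \<bullet> w) * (\<i> * v) = 0"
    unfolding L2 by (simp add: complex_eq_iff det2_def inner_complex_def algebra_simps power2_eq_square)
  show ?thesis
  proof -
    have "complex_of_real (\<kappa> * L ^ 3) * v + complex_of_real (L\<^sup>2) * (\<i> * w) - complex_of_real (v \<bullet> w) * (\<i> * v) = 0"
      using core d by simp
    then have c2: "\<i> * w = (complex_of_real (v \<bullet> w) * (\<i> * v) - complex_of_real (\<kappa> * L ^ 3) * v) / complex_of_real (L\<^sup>2)"
      using L by (simp add: field_simps)
    show ?thesis unfolding c2 Wf_def using L
      by (simp add: field_simps power2_eq_square power3_eq_cube)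
  qed
qed


lemma cont_dPhi:
  fixes Uu V Wv du dv dw :: "'a::topological_space \<Rightarrow> complex"
  assumes "continuous_on T Uu" "continuous_on T V" "continuous_on T Wv"
    "continuous_on T du" "continuous_on T dv" "continuous_on T dw"
    and nz: "\<And>z. z \<in> T \<Longrightarrow> V z \<noteq> 0"
  shows "continuous_on T (\<lambda>z. dPhi A (Uu z) (V z) (Wv z) (du z) (dv z) (dw z))"
  unfolding dPhi_def det2_def using assms
  by (auto intro!: continuous_intros)

lemma cont_Phi:
  fixes Uu V Wv :: "'a::topological_space \<Rightarrow> complex"
  assumes "continuous_on T Uu" "continuous_on T V" "continuous_on T Wv"
    and nz: "\<And>z. z \<in> T \<Longrightarrow> V z \<noteq> 0"
  shows "continuous_on T (\<lambda>z. Phi A (Uu z) (V z) (Wv z))"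
  unfolding Phi_def det2_def using assms
  by (auto intro!: continuous_intros)

lemma ibp_interval:
  fixes F G :: "real \<Rightarrow> complex"
  assumes pq: "p \<le> q" and cF: "continuous_on {p..q} F" and cG: "continuous_on {p..q} G"
    and cG': "continuous_on {p..q} G'"
    and dF: "\<And>x. x \<in> {p<..<q} \<Longrightarrow> (F has_vector_derivative F' x) (at x)"
    and dG: "\<And>x. x \<in> {p<..<q} \<Longrightarrow> (G has_vector_derivative G' x) (at x)"
    and bd: "F q \<bullet> G q - F p \<bullet> G p = 0"
  shows "integral {p..q} (\<lambda>x. F' x \<bullet> G x) = - integral {p..q} (\<lambda>x. F x \<bullet> G' x)"
proof -
  have "(\<lambda>x. F x \<bullet> G' x) integrable_on {p..q}"
    using cF cG' by (auto intro!: integrable_continuous_interval continuous_intros)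
  then have i: "((\<lambda>x. F x \<bullet> G' x) has_integral (F q \<bullet> G q - F p \<bullet> G p - (- integral {p..q} (\<lambda>x. F x \<bullet> G' x)))) {p..q}"
    using bd by (simp add: has_integral_integral)
  have "((\<lambda>x. F' x \<bullet> G x) has_integral (- integral {p..q} (\<lambda>x. F x \<bullet> G' x))) {p..q}"
    by (rule integration_by_parts_interior[OF bounded_bilinear_inner pq cF cG dF dG i])
  then show ?thesis by (rule integral_unique)
qed

definition smp :: "real \<Rightarrow> real \<Rightarrow> (real \<Rightarrow> real \<Rightarrow> 'a::real_normed_vector) \<Rightarrow> bool" where
  "smp a b g \<longleftrightarrow> smooth_on ({a..b} \<times> UNIV) (\<lambda>x. g (fst x) (snd x)) \<and> (\<forall>t\<in>{a..b}. \<forall>\<theta>. g t (\<theta> + 2 * pi) = g t \<theta>)"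

lemma smp_path: "smooth_path a b c \<Longrightarrow> smp a b c"
  unfolding smooth_path_def smp_def by (simp add: case_prod_unfold)

lemma smp_smooth: "smp a b g \<Longrightarrow> smooth_on ({a..b} \<times> UNIV) (\<lambda>x. g (fst x) (snd x))"
  unfolding smp_def by simp

lemma smp_per: "smp a b g \<Longrightarrow> t \<in> {a..b} \<Longrightarrow> g t (\<theta> + 2 * pi) = g t \<theta>"
  unfolding smp_def by simp

lemma smp_dT_has:
  assumes ab: "a < b" and g: "smp a b g" and t: "t \<in> {a..b}"
  shows "((\<lambda>s. g s \<theta>) has_vector_derivative dT a b g t \<theta>) (at t within {a..b})"
  using partials(1)[OF ab smp_smooth[OF g] t] .

lemma smp_dTh_has:
  assumes ab: "a < b" and g: "smp a b g" and t: "t \<in> {a..b}"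
  shows "((\<lambda>\<phi>. g t \<phi>) has_vector_derivative dTh g t \<theta>) (at \<theta>)"
  using partials(2)[OF ab smp_smooth[OF g] t] .

lemma smp_dT: assumes ab: "a < b" and g: "smp a b g" shows "smp a b (dT a b g)"
  unfolding smp_def
proof
  show "smooth_on ({a..b} \<times> UNIV) (\<lambda>x. dT a b g (fst x) (snd x))"
    using partials(3)[OF ab smp_smooth[OF g]] .
  show "\<forall>t\<in>{a..b}. \<forall>\<theta>. dT a b g t (\<theta> + 2 * pi) = dT a b g t \<theta>"
    using periodic_dT[OF ab _ smp_per[OF g] smp_dT_has[OF ab g]] by blast
qed

lemma smp_dTh: assumes ab: "a < b" and g: "smp a b g" shows "smp a b (dTh g)"
  unfolding smp_def
proof
  show "smooth_on ({a..b} \<times> UNIV) (\<lambda>x. dTh g (fst x) (snd x))"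
    using partials(4)[OF ab smp_smooth[OF g]] .
  show "\<forall>t\<in>{a..b}. \<forall>\<theta>. dTh g t (\<theta> + 2 * pi) = dTh g t \<theta>"
    using periodic_dTh[OF smp_per[OF g] smp_dTh_has[OF ab g]] by blast
qed

lemma smp_cont: "smp a b g \<Longrightarrow> continuous_on ({a..b} \<times> UNIV) (\<lambda>x. g (fst x) (snd x))"
  using smooth_on_cont smp_smooth by blast

lemma det2_Im: "det2 z w = Im (cnj z * w)"
  by (simp add: det2_def algebra_simps)

definition Wc :: "real \<Rightarrow> real \<Rightarrow> (real \<Rightarrow> real \<Rightarrow> complex) \<Rightarrow> real \<Rightarrow> real \<Rightarrow> real" where
  "Wc a b c = (\<lambda>t \<theta>. curv c t \<theta> * (cmod (dT a b c t \<theta>))\<^sup>2)"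

definition Xc :: "real \<Rightarrow> real \<Rightarrow> real \<Rightarrow> (real \<Rightarrow> real \<Rightarrow> complex) \<Rightarrow> real \<Rightarrow> real \<Rightarrow> complex" where
  "Xc A a b c = (\<lambda>t \<theta>. of_real ((1 + A * (curv c t \<theta>)\<^sup>2) * cmod (dTh c t \<theta>)) * dT a b c t \<theta>)"

definition Yc :: "real \<Rightarrow> real \<Rightarrow> real \<Rightarrow> (real \<Rightarrow> real \<Rightarrow> complex) \<Rightarrow> real \<Rightarrow> real \<Rightarrow> complex" where
  "Yc A a b c = (\<lambda>t \<theta>. of_real ((-1 + A * (curv c t \<theta>)\<^sup>2) / 2 * (cmod (dT a b c t \<theta>))\<^sup>2 / cmod (dTh c t \<theta>))
                   * dTh c t \<theta>
              + of_real (A * dTh (Wc a b c) t \<theta> / (cmod (dTh c t \<theta>))\<^sup>2) * (\<i> * dTh c t \<theta>))"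

definition Rc :: "real \<Rightarrow> real \<Rightarrow> real \<Rightarrow> (real \<Rightarrow> real \<Rightarrow> complex) \<Rightarrow> real \<Rightarrow> real \<Rightarrow> complex" where
  "Rc A a b c = (\<lambda>t \<theta>. dT a b (Xc A a b c) t \<theta> - dTh (Yc A a b c) t \<theta>)"

lemma geodesic_eq_Rc: "geodesic_eq A a b c \<longleftrightarrow> (\<forall>t\<in>{a..b}. \<forall>\<theta>. Rc A a b c t \<theta> = 0)"
  unfolding geodesic_eq_def Rc_def Xc_def Yc_def Wc_def by simp

locale setting =
  fixes A a b :: real and c :: "real \<Rightarrow> real \<Rightarrow> complex"
  assumes ab: "a < b" and spc: "smooth_path a b c" and imm: "immersion_path a b c"
begin

abbreviation "S \<equiv> {a..b} \<times> (UNIV :: real set)"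

lemma smp_c: "smp a b c" using smp_path[OF spc] .
lemma smp_ct: "smp a b (dT a b c)" using smp_dT[OF ab smp_c] .
lemma smp_cth: "smp a b (dTh c)" using smp_dTh[OF ab smp_c] .
lemma smp_cthth: "smp a b (dTh (dTh c))" using smp_dTh[OF ab smp_cth] .

lemma cth_nz: "t \<in> {a..b} \<Longrightarrow> dTh c t \<theta> \<noteq> 0"
  using imm unfolding immersion_path_def by blast

lemma cth_nz': "x \<in> S \<Longrightarrow> dTh c (fst x) (snd x) \<noteq> 0"
  using cth_nz by (auto simp: mem_Times_iff)

lemma sm_L: "smooth_on S (\<lambda>x. cmod (dTh c (fst x) (snd x)))"
  by (rule smooth_on_cmod[OF smp_smooth[OF smp_cth] cth_nz'])

lemma smp_curv: "smp a b (curv c)"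
  unfolding smp_def
proof
  have e: "(\<lambda>x. curv c (fst x) (snd x)) = (\<lambda>x. Im (cnj (dTh c (fst x) (snd x)) * dTh (dTh c) (fst x) (snd x)) * inverse (cmod (dTh c (fst x) (snd x)) ^ 3))"
    by (simp add: curv_def det2_Im divide_inverse)
  show "smooth_on S (\<lambda>x. curv c (fst x) (snd x))"
    unfolding e
    apply (intro smooth_on_mult smooth_on_Im smooth_on_cnj smooth_on_inverse smooth_on_power sm_L
        smp_smooth[OF smp_cth] smp_smooth[OF smp_cthth])
    using cth_nz' by simp
  show "\<forall>t\<in>{a..b}. \<forall>\<theta>. curv c t (\<theta> + 2 * pi) = curv c t \<theta>"
    using smp_per[OF smp_cth] smp_per[OF smp_cthth] by (simp add: curv_def)
qed

lemma smp_W: "smp a b (Wc a b c)"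
  unfolding smp_def
proof
  show "smooth_on S (\<lambda>x. Wc a b c (fst x) (snd x))"
    unfolding Wc_def cmod_power2
    by (intro smooth_on_mult smooth_on_add smooth_on_power smooth_on_Re smooth_on_Im
        smp_smooth[OF smp_curv] smp_smooth[OF smp_ct])
  show "\<forall>t\<in>{a..b}. \<forall>\<theta>. Wc a b c t (\<theta> + 2 * pi) = Wc a b c t \<theta>"
    using smp_per[OF smp_curv] smp_per[OF smp_ct] by (simp add: Wc_def)
qed


lemma smp_Wth: "smp a b (dTh (Wc a b c))" using smp_dTh[OF ab smp_W] .

lemma cmod_cth_nz: "x \<in> S \<Longrightarrow> cmod (dTh c (fst x) (snd x)) \<noteq> 0"
  using cth_nz' by simp

lemma smp_X: "smp a b (Xc A a b c)"
  unfolding smp_def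
proof
  show "smooth_on S (\<lambda>x. Xc A a b c (fst x) (snd x))"
    unfolding Xc_def
    by (intro smooth_on_mult smooth_on_add smooth_on_power smooth_on_of_real smooth_on_const
        smp_smooth[OF smp_curv] smp_smooth[OF smp_ct] sm_L)
  show "\<forall>t\<in>{a..b}. \<forall>\<theta>. Xc A a b c t (\<theta> + 2 * pi) = Xc A a b c t \<theta>"
    using smp_per[OF smp_curv] smp_per[OF smp_ct] smp_per[OF smp_cth] by (simp add: Xc_def)
qed

lemma smp_Y: "smp a b (Yc A a b c)"
  unfolding smp_def
proof
  show "smooth_on S (\<lambda>x. Yc A a b c (fst x) (snd x))"
    unfolding Yc_def divide_inverse cmod_power2[of "dT a b c _ _"]
    apply (intro smooth_on_mult smooth_on_add smooth_on_power smooth_on_of_real smooth_on_const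
        smooth_on_Re smooth_on_Im smooth_on_inverse
        smp_smooth[OF smp_curv] smp_smooth[OF smp_ct] smp_smooth[OF smp_cth] sm_L smp_smooth[OF smp_Wth])
    using cmod_cth_nz by auto
  show "\<forall>t\<in>{a..b}. \<forall>\<theta>. Yc A a b c t (\<theta> + 2 * pi) = Yc A a b c t \<theta>"
    using smp_per[OF smp_curv] smp_per[OF smp_ct] smp_per[OF smp_cth] smp_per[OF smp_Wth]
    by (simp add: Yc_def)
qed

lemma smp_Xt: "smp a b (dT a b (Xc A a b c))" using smp_dT[OF ab smp_X] .
lemma smp_Yth: "smp a b (dTh (Yc A a b c))" using smp_dTh[OF ab smp_Y] .

lemma smp_R: "smp a b (Rc A a b c)"
  unfolding smp_def
proof
  show "smooth_on S (\<lambda>x. Rc A a b c (fst x) (snd x))"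
    unfolding Rc_def
    by (intro smooth_on_diff smp_smooth[OF smp_Xt] smp_smooth[OF smp_Yth])
  show "\<forall>t\<in>{a..b}. \<forall>\<theta>. Rc A a b c t (\<theta> + 2 * pi) = Rc A a b c t \<theta>"
    using smp_per[OF smp_Xt] smp_per[OF smp_Yth] by (simp add: Rc_def)
qed

end

locale var_setting = setting +
  fixes h :: "real \<Rightarrow> real \<Rightarrow> complex"
  assumes adm: "admissible_variation a b h"
begin

lemma smp_h: "smp a b h" using adm smp_path unfolding admissible_variation_def by blast
lemma h_a: "h a \<theta> = 0" and h_b: "h b \<theta> = 0" using adm unfolding admissible_variation_def by auto
lemma smp_ht: "smp a b (dT a b h)" using smp_dT[OF ab smp_h] .
lemma smp_hth: "smp a b (dTh h)" using smp_dTh[OF ab smp_h] .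
lemma smp_hthth: "smp a b (dTh (dTh h))" using smp_dTh[OF ab smp_hth] .

lemma var_dT:
  assumes t: "t \<in> {a..b}"
  shows "dT a b (\<lambda>t \<theta>. c t \<theta> + of_real s * h t \<theta>) t \<theta> = dT a b c t \<theta> + of_real s * dT a b h t \<theta>"
proof -
  have "((\<lambda>t. c t \<theta> + of_real s * h t \<theta>) has_vector_derivative dT a b c t \<theta> + of_real s * dT a b h t \<theta>) (at t within {a..b})"
    by (intro has_vector_derivative_add has_vector_derivative_mult_right smp_dT_has[OF ab smp_c t] smp_dT_has[OF ab smp_h t])
  then show ?thesis unfolding dT_def
    using vector_derivative_within_cbox[OF ab, of t] t by (simp add: cbox_interval)
qed

lemma var_dTh:
  assumes t: "t \<in> {a..b}"
  shows "dTh (\<lambda>t \<theta>. c t \<theta> + of_real s * h t \<theta>) t \<theta> = dTh c t \<theta> + of_real s * dTh h t \<theta>"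
proof -
  have "((\<lambda>\<phi>. c t \<phi> + of_real s * h t \<phi>) has_vector_derivative dTh c t \<theta> + of_real s * dTh h t \<theta>) (at \<theta>)"
    by (intro has_vector_derivative_add has_vector_derivative_mult_right smp_dTh_has[OF ab smp_c t] smp_dTh_has[OF ab smp_h t])
  then show ?thesis unfolding dTh_def using vector_derivative_at by blast
qed

lemma var_dThth:
  assumes t: "t \<in> {a..b}"
  shows "dTh (dTh (\<lambda>t \<theta>. c t \<theta> + of_real s * h t \<theta>)) t \<theta> = dTh (dTh c) t \<theta> + of_real s * dTh (dTh h) t \<theta>"
proof -
  have e: "(\<lambda>\<phi>. dTh (\<lambda>t \<theta>. c t \<theta> + of_real s * h t \<theta>) t \<phi>) = (\<lambda>\<phi>. dTh c t \<phi> + of_real s * dTh h t \<phi>)"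
    using var_dTh[OF t] by auto
  have "((\<lambda>\<phi>. dTh c t \<phi> + of_real s * dTh h t \<phi>) has_vector_derivative dTh (dTh c) t \<theta> + of_real s * dTh (dTh h) t \<theta>) (at \<theta>)"
    by (intro has_vector_derivative_add has_vector_derivative_mult_right smp_dTh_has[OF ab smp_cth t] smp_dTh_has[OF ab smp_hth t])
  then show ?thesis unfolding dTh_def[of "dTh (\<lambda>t \<theta>. c t \<theta> + of_real s * h t \<theta>)"] e
    unfolding dTh_def[symmetric] using vector_derivative_at by (metis dTh_def)
qed

lemma var_integrand:
  assumes t: "t \<in> {a..b}"
  shows "(1 + A * (curv (\<lambda>t \<theta>. c t \<theta> + of_real s * h t \<theta>) t \<theta>)\<^sup>2) * (cmod (dT a b (\<lambda>t \<theta>. c t \<theta> + of_real s * h t \<theta>) t \<theta>))\<^sup>2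
          * cmod (dTh (\<lambda>t \<theta>. c t \<theta> + of_real s * h t \<theta>) t \<theta>)
       = Phi A (dT a b c t \<theta> + of_real s * dT a b h t \<theta>) (dTh c t \<theta> + of_real s * dTh h t \<theta>) (dTh (dTh c) t \<theta> + of_real s * dTh (dTh h) t \<theta>)"
  unfolding Phi_def curv_def var_dT[OF t] var_dTh[OF t] var_dThth[OF t] ..

definition bx :: "(real \<times> real) set" where "bx = cbox (a, 0) (b, 2 * pi)"

lemma box_sub: "bx \<subseteq> S"
  unfolding bx_def cbox_Pair_eq by (auto simp: cbox_interval)

lemma box_ne: "bx \<noteq> {}"
  unfolding bx_def cbox_Pair_eq using ab by (auto simp: cbox_interval)

lemma cont_box: "smp a b g \<Longrightarrow> continuous_on bx (\<lambda>x. g (fst x) (snd x))"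
  using smp_cont box_sub continuous_on_subset by blast

lemma eps_exists:
  obtains \<epsilon> where "\<epsilon> > 0" "\<And>s x. \<bar>s\<bar> \<le> \<epsilon> \<Longrightarrow> x \<in> bx \<Longrightarrow> dTh c (fst x) (snd x) + of_real s * dTh h (fst x) (snd x) \<noteq> 0"
proof -
  have cb: "compact bx" unfolding bx_def by simp
  have c1: "continuous_on bx (\<lambda>x. cmod (dTh c (fst x) (snd x)))"
    by (intro continuous_intros cont_box smp_cth)
  have c2: "continuous_on bx (\<lambda>x. cmod (dTh h (fst x) (snd x)))"
    by (intro continuous_intros cont_box smp_hth)
  obtain x0 where x0: "x0 \<in> bx" "\<And>y. y \<in> bx \<Longrightarrow> cmod (dTh c (fst x0) (snd x0)) \<le> cmod (dTh c (fst y) (snd y))"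
    using continuous_attains_inf[OF cb box_ne c1] by blast
  obtain x1 where x1: "x1 \<in> bx" "\<And>y. y \<in> bx \<Longrightarrow> cmod (dTh h (fst y) (snd y)) \<le> cmod (dTh h (fst x1) (snd x1))"
    using continuous_attains_sup[OF cb box_ne c2] by blast
  define m where "m = cmod (dTh c (fst x0) (snd x0))"
  define M where "M = cmod (dTh h (fst x1) (snd x1))"
  have m: "m > 0" unfolding m_def using cth_nz' box_sub x0(1) by auto
  have M: "M \<ge> 0" unfolding M_def by simp
  have Mm: "0 \<le> M * m" using m M by simp
  define \<epsilon> where "\<epsilon> = m / (2 * (M + 1))"
  have \<epsilon>: "\<epsilon> > 0" unfolding \<epsilon>_def using m M by simp
  have "dTh c (fst x) (snd x) + of_real s * dTh h (fst x) (snd x) \<noteq> 0" if s: "\<bar>s\<bar> \<le> \<epsilon>" and x: "x \<in> bx" for s x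
  proof
    assume z: "dTh c (fst x) (snd x) + of_real s * dTh h (fst x) (snd x) = 0"
    have "m \<le> cmod (dTh c (fst x) (snd x))" using x0(2)[OF x] unfolding m_def .
    also have "\<dots> = cmod (of_real s * dTh h (fst x) (snd x))"
      using z by (metis add_eq_0_iff norm_minus_cancel)
    also have "\<dots> = \<bar>s\<bar> * cmod (dTh h (fst x) (snd x))" by (simp add: norm_mult)
    also have "\<dots> \<le> \<epsilon> * M" using s x1(2)[OF x] M unfolding M_def by (intro mult_mono) auto
    also have "\<dots> < m" unfolding \<epsilon>_def using m M by (simp add: field_simps) (use Mm in linarith)
    finally show False by simp
  qed
  then show ?thesis using that \<epsilon> by blast
qed


abbreviation "uu x \<equiv> dT a b c (fst x) (snd x)"
abbreviation "vv x \<equiv> dTh c (fst x) (snd x)"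
abbreviation "ww x \<equiv> dTh (dTh c) (fst x) (snd x)"
abbreviation "du x \<equiv> dT a b h (fst x) (snd x)"
abbreviation "dv x \<equiv> dTh h (fst x) (snd x)"
abbreviation "dw x \<equiv> dTh (dTh h) (fst x) (snd x)"

lemma cont_UB:
  assumes "smp a b g"
  shows "continuous_on (T \<times> bx) (\<lambda>z. g (fst (snd z)) (snd (snd z)))"
proof -
  have "continuous_on (T \<times> bx) (\<lambda>z. (\<lambda>x. g (fst x) (snd x)) (snd z))"
    by (rule continuous_on_compose2[OF cont_box[OF assms] continuous_on_snd]) auto
  then show ?thesis by simp
qed

lemma energy_deriv:
  "((\<lambda>s. energy A a b (\<lambda>t \<theta>. c t \<theta> + of_real s * h t \<theta>)) has_real_derivative
    1/2 * integral bx (\<lambda>x. dPhi A (uu x) (vv x) (ww x) (du x) (dv x) (dw x))) (at 0)"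
proof -
  obtain \<epsilon> where \<epsilon>: "\<epsilon> > 0" and nz0: "\<And>s x. \<bar>s\<bar> \<le> \<epsilon> \<Longrightarrow> x \<in> bx \<Longrightarrow> vv x + of_real s * dv x \<noteq> 0"
    using eps_exists by blast
  define U where "U = cball (0::real) \<epsilon>"
  define f where "f s x = Phi A (uu x + of_real s * du x) (vv x + of_real s * dv x) (ww x + of_real s * dw x)" for s x
  define fx where "fx s x = dPhi A (uu x + of_real s * du x) (vv x + of_real s * dv x) (ww x + of_real s * dw x) (du x) (dv x) (dw x)" for s x
  have nz: "vv x + of_real s * dv x \<noteq> 0" if "s \<in> U" "x \<in> bx" for s x
    using nz0 that unfolding U_def mem_cball dist_0_norm by auto
  have d: "((\<lambda>s. f s x) has_field_derivative fx s x) (at s within U)" if "s \<in> U" "x \<in> bx" for s x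
    unfolding f_def fx_def by (rule deriv_Phi[OF nz[OF that]])
  have cf: "continuous_on bx (f s)" if "s \<in> U" for s
    unfolding f_def
    by (rule cont_Phi) (use nz that in \<open>auto intro!: continuous_intros cont_box[OF smp_ct] cont_box[OF smp_ht] cont_box[OF smp_cth] cont_box[OF smp_hth] cont_box[OF smp_cthth] cont_box[OF smp_hthth]\<close>)
  have int: "f s integrable_on cbox (a, 0) (b, 2 * pi)" if "s \<in> U" for s
    using cf[OF that] unfolding bx_def by (rule integrable_continuous)
  have cfx: "continuous_on (U \<times> cbox (a, 0) (b, 2 * pi)) (\<lambda>(s, x). fx s x)"
    unfolding case_prod_unfold fx_def bx_def[symmetric]
    by (rule cont_dPhi) (use nz in \<open>auto intro!: continuous_intros cont_UB smp_ct smp_ht smp_cth smp_hth smp_cthth smp_hthth\<close>)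
  have "((\<lambda>s. integral (cbox (a, 0) (b, 2 * pi)) (f s)) has_field_derivative integral (cbox (a, 0) (b, 2 * pi)) (fx 0)) (at 0 within U)"
    by (rule leibniz_rule_field_derivative[OF d[unfolded bx_def] int cfx]) (auto simp: U_def \<epsilon> less_imp_le)
  moreover have "at 0 within U = at 0"
    using \<epsilon> unfolding U_def by (intro at_within_interior) simp
  ultimately have D: "((\<lambda>s. integral bx (f s)) has_field_derivative integral bx (fx 0)) (at 0)"
    unfolding bx_def by simp
  have fx0: "fx 0 = (\<lambda>x. dPhi A (uu x) (vv x) (ww x) (du x) (dv x) (dw x))"
    unfolding fx_def by simp
  have E: "energy A a b (\<lambda>t \<theta>. c t \<theta> + of_real s * h t \<theta>) = 1/2 * integral bx (f s)" if "s \<in> ball 0 \<epsilon>" for s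
  proof -
    have sU: "s \<in> U" using that unfolding U_def by auto
    have "integral {a..b} (\<lambda>t. integral {0..2*pi} (\<lambda>\<theta>.
      (1 + A * (curv (\<lambda>t \<theta>. c t \<theta> + of_real s * h t \<theta>) t \<theta>)\<^sup>2) * (cmod (dT a b (\<lambda>t \<theta>. c t \<theta> + of_real s * h t \<theta>) t \<theta>))\<^sup>2
        * cmod (dTh (\<lambda>t \<theta>. c t \<theta> + of_real s * h t \<theta>) t \<theta>)))
      = integral {a..b} (\<lambda>t. integral {0..2*pi} (\<lambda>\<theta>. f s (t, \<theta>)))"
      by (intro integral_cong) (simp add: var_integrand f_def)
    also have "\<dots> = integral bx (f s)"
      using integral_prod_continuous[OF cf[OF sU, unfolded bx_def]] unfolding bx_def
      by (simp add: cbox_interval)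
    finally show ?thesis unfolding energy_def by simp
  qed
  have "((\<lambda>s. 1/2 * integral bx (f s)) has_field_derivative 1/2 * integral bx (fx 0)) (at 0)"
    by (rule DERIV_cmult[OF D])
  then have "((\<lambda>s. energy A a b (\<lambda>t \<theta>. c t \<theta> + of_real s * h t \<theta>)) has_field_derivative 1/2 * integral bx (fx 0)) (at 0)"
    by (rule has_field_derivative_transform_within_open[where S="ball 0 \<epsilon>"]) (use \<epsilon> E in auto)
  then show ?thesis unfolding fx0 .
qed


end

definition Z2c :: "real \<Rightarrow> real \<Rightarrow> real \<Rightarrow> (real \<Rightarrow> real \<Rightarrow> complex) \<Rightarrow> real \<Rightarrow> real \<Rightarrow> complex" where
  "Z2c A a b c = (\<lambda>t \<theta>. of_real (A * Wc a b c t \<theta> / (cmod (dTh c t \<theta>))\<^sup>2) * (\<i> * dTh c t \<theta>))"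

definition Z2th :: "real \<Rightarrow> real \<Rightarrow> real \<Rightarrow> (real \<Rightarrow> real \<Rightarrow> complex) \<Rightarrow> real \<Rightarrow> real \<Rightarrow> complex" where
  "Z2th A a b c = (\<lambda>t \<theta>. of_real (A * (dTh (Wc a b c) t \<theta> * (cmod (dTh c t \<theta>))\<^sup>2 - Wc a b c t \<theta> * (2 * (dTh c t \<theta> \<bullet> dTh (dTh c) t \<theta>)))
      / ((cmod (dTh c t \<theta>))\<^sup>2 * (cmod (dTh c t \<theta>))\<^sup>2)) * (\<i> * dTh c t \<theta>)
    + of_real (A * Wc a b c t \<theta> / (cmod (dTh c t \<theta>))\<^sup>2) * (\<i> * dTh (dTh c) t \<theta>))"

definition Z1c :: "real \<Rightarrow> real \<Rightarrow> real \<Rightarrow> (real \<Rightarrow> real \<Rightarrow> complex) \<Rightarrow> real \<Rightarrow> real \<Rightarrow> complex" where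
  "Z1c A a b c = (\<lambda>t \<theta>. of_real ((1 + A * (curv c t \<theta>)\<^sup>2) / 2 * (cmod (dT a b c t \<theta>))\<^sup>2 / cmod (dTh c t \<theta>)
        - 3 * A * Wc a b c t \<theta> * curv c t \<theta> / cmod (dTh c t \<theta>)) * dTh c t \<theta>
      - of_real (A * Wc a b c t \<theta> / (cmod (dTh c t \<theta>))\<^sup>2) * (\<i> * dTh (dTh c) t \<theta>))"

lemma smp_line_th:
  assumes "smp a b g" "t \<in> {a..b}"
  shows "continuous_on T (\<lambda>\<phi>. g t \<phi>)"
proof -
  have "continuous_on T (\<lambda>\<phi>. (\<lambda>x. g (fst x) (snd x)) (t, \<phi>))"
    by (rule continuous_on_compose2[OF smp_cont[OF assms(1)]]) (use assms(2) in \<open>auto intro!: continuous_intros\<close>)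
  then show ?thesis by simp
qed

lemma smp_line_t:
  assumes "smp a b g"
  shows "continuous_on {a..b} (\<lambda>s. g s \<theta>)"
proof -
  have "continuous_on {a..b} (\<lambda>s. (\<lambda>x. g (fst x) (snd x)) (s, \<theta>))"
    by (rule continuous_on_compose2[OF smp_cont[OF assms(1)]]) (auto intro!: continuous_intros)
  then show ?thesis by simp
qed

context setting begin

lemma smp_Z2: "smp a b (Z2c A a b c)"
  unfolding smp_def
proof
  show "smooth_on S (\<lambda>x. Z2c A a b c (fst x) (snd x))"
    unfolding Z2c_def divide_inverse
    apply (intro smooth_on_mult smooth_on_add smooth_on_power smooth_on_of_real smooth_on_const
        smooth_on_inverse smp_smooth[OF smp_cth] sm_L smp_smooth[OF smp_W])
    using cmod_cth_nz by auto
  show "\<forall>t\<in>{a..b}. \<forall>\<theta>. Z2c A a b c t (\<theta> + 2 * pi) = Z2c A a b c t \<theta>"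
    using smp_per[OF smp_cth] smp_per[OF smp_W] by (simp add: Z2c_def)
qed

lemma Z2_deriv:
  assumes t: "t \<in> {a..b}"
  shows "((\<lambda>\<phi>. Z2c A a b c t \<phi>) has_vector_derivative Z2th A a b c t \<theta>) (at \<theta>)"
proof -
  have dv: "((\<lambda>\<phi>. dTh c t \<phi>) has_vector_derivative dTh (dTh c) t \<theta>) (at \<theta>)"
    by (rule smp_dTh_has[OF ab smp_cth t])
  have dW: "((\<lambda>\<phi>. Wc a b c t \<phi>) has_real_derivative dTh (Wc a b c) t \<theta>) (at \<theta>)"
    unfolding has_real_derivative_iff_has_vector_derivative by (rule smp_dTh_has[OF ab smp_W t])
  have dRe: "((\<lambda>\<phi>. Re (dTh c t \<phi>)) has_real_derivative Re (dTh (dTh c) t \<theta>)) (at \<theta>)"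
    by (rule has_field_derivative_Re[OF dv])
  have dIm: "((\<lambda>\<phi>. Im (dTh c t \<phi>)) has_real_derivative Im (dTh (dTh c) t \<theta>)) (at \<theta>)"
    by (rule has_field_derivative_Im[OF dv])
  have dL: "((\<lambda>\<phi>. (cmod (dTh c t \<phi>))\<^sup>2) has_real_derivative 2 * (dTh c t \<theta> \<bullet> dTh (dTh c) t \<theta>)) (at \<theta>)"
    unfolding cmod_power2 inner_complex_def
    apply (rule DERIV_cong)
     apply (rule DERIV_add[OF DERIV_power[OF dRe] DERIV_power[OF dIm]])
    by (simp add: algebra_simps)
  have Lnz: "(cmod (dTh c t \<theta>))\<^sup>2 \<noteq> 0" using cth_nz[OF t] by simp
  have dg: "((\<lambda>\<phi>. A * Wc a b c t \<phi> / (cmod (dTh c t \<phi>))\<^sup>2) has_real_derivative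
      A * (dTh (Wc a b c) t \<theta> * (cmod (dTh c t \<theta>))\<^sup>2 - Wc a b c t \<theta> * (2 * (dTh c t \<theta> \<bullet> dTh (dTh c) t \<theta>)))
      / ((cmod (dTh c t \<theta>))\<^sup>2 * (cmod (dTh c t \<theta>))\<^sup>2)) (at \<theta>)"
    apply (rule DERIV_cong)
     apply (rule DERIV_divide[OF DERIV_cmult[OF dW] dL Lnz])
    by (simp add: algebra_simps)
  have "((\<lambda>\<phi>. of_real (A * Wc a b c t \<phi> / (cmod (dTh c t \<phi>))\<^sup>2) * (\<i> * dTh c t \<phi>)) has_vector_derivative
     of_real (A * Wc a b c t \<theta> / (cmod (dTh c t \<theta>))\<^sup>2) * (\<i> * dTh (dTh c) t \<theta>)
     + of_real (A * (dTh (Wc a b c) t \<theta> * (cmod (dTh c t \<theta>))\<^sup>2 - Wc a b c t \<theta> * (2 * (dTh c t \<theta> \<bullet> dTh (dTh c) t \<theta>)))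
      / ((cmod (dTh c t \<theta>))\<^sup>2 * (cmod (dTh c t \<theta>))\<^sup>2)) * (\<i> * dTh c t \<theta>)) (at \<theta>)"
    by (rule has_vector_derivative_mult[OF has_vector_derivative_of_real[OF dg] has_vector_derivative_mult_right[OF dv]])
  then show ?thesis unfolding Z2c_def Z2th_def
    by (rule has_vector_derivative_eq_rhs) (simp add: add.commute)
qed

lemma dTh_Z2: "t \<in> {a..b} \<Longrightarrow> dTh (Z2c A a b c) t \<theta> = Z2th A a b c t \<theta>"
  unfolding dTh_def using Z2_deriv vector_derivative_at by blast

lemma Z1_minus_Z2th:
  assumes t: "t \<in> {a..b}"
  shows "Z1c A a b c t \<theta> - Z2th A a b c t \<theta> = - Yc A a b c t \<theta>"
proof -
  note k = key_identity[where u="dT a b c t \<theta>" and w="dTh (dTh c) t \<theta>" and A=A and ?W\<theta>="dTh (Wc a b c) t \<theta>", OF cth_nz[OF t]]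
  show ?thesis unfolding Z1c_def Z2th_def Yc_def Wc_def curv_def
    by (rule k[unfolded Wc_def curv_def])
qed


end

context var_setting begin

lemma box_iter:
  fixes G :: "real \<times> real \<Rightarrow> real"
  assumes "continuous_on bx G"
  shows "integral bx G = integral {a..b} (\<lambda>t. integral {0..2*pi} (\<lambda>\<theta>. G (t, \<theta>)))"
  using integral_prod_continuous[of a 0 b "2*pi" G] assms unfolding bx_def by (simp add: cbox_interval)

lemma box_iter2:
  fixes G :: "real \<times> real \<Rightarrow> real"
  assumes "continuous_on bx G"
  shows "integral bx G = integral {0..2*pi} (\<lambda>\<theta>. integral {a..b} (\<lambda>t. G (t, \<theta>)))"
proof -
  have c: "continuous_on (cbox (a, 0) (b, 2 * pi)) (\<lambda>(x, y). G (x, y))"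
    using assms unfolding bx_def by simp
  show ?thesis
    using box_iter[OF assms] integral_swap_continuous[OF c] by (simp add: cbox_interval)
qed

lemma at_int:
  assumes "t \<in> {a<..<b}" "(f has_vector_derivative D) (at t within {a..b})"
  shows "(f has_vector_derivative D) (at t)"
  using assms at_within_interior[of t "{a..b}"] by simp

lemma I1:
  "integral bx (\<lambda>x. Xc A a b c (fst x) (snd x) \<bullet> du x)
   = - integral bx (\<lambda>x. dT a b (Xc A a b c) (fst x) (snd x) \<bullet> h (fst x) (snd x))"
proof -
  have line: "integral {a..b} (\<lambda>t. Xc A a b c t \<theta> \<bullet> dT a b h t \<theta>) = - integral {a..b} (\<lambda>t. dT a b (Xc A a b c) t \<theta> \<bullet> h t \<theta>)" for \<theta>
  proof -
    have "integral {a..b} (\<lambda>t. dT a b (Xc A a b c) t \<theta> \<bullet> h t \<theta>) = - integral {a..b} (\<lambda>t. Xc A a b c t \<theta> \<bullet> dT a b h t \<theta>)"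
    proof (rule ibp_interval)
      show "a \<le> b" using ab by simp
      show "continuous_on {a..b} (\<lambda>t. Xc A a b c t \<theta>)" by (rule smp_line_t[OF smp_X])
      show "continuous_on {a..b} (\<lambda>t. h t \<theta>)" by (rule smp_line_t[OF smp_h])
      show "continuous_on {a..b} (\<lambda>t. dT a b h t \<theta>)" by (rule smp_line_t[OF smp_ht])
      show "((\<lambda>t. Xc A a b c t \<theta>) has_vector_derivative dT a b (Xc A a b c) x \<theta>) (at x)" if "x \<in> {a<..<b}" for x
        using that by (intro at_int smp_dT_has[OF ab smp_X]) auto
      show "((\<lambda>t. h t \<theta>) has_vector_derivative dT a b h x \<theta>) (at x)" if "x \<in> {a<..<b}" for x
        using that by (intro at_int smp_dT_has[OF ab smp_h]) auto
      show "Xc A a b c b \<theta> \<bullet> h b \<theta> - Xc A a b c a \<theta> \<bullet> h a \<theta> = 0" by (simp add: h_a h_b)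
    qed
    then show ?thesis by simp
  qed
  have c1: "continuous_on bx (\<lambda>x. Xc A a b c (fst x) (snd x) \<bullet> du x)"
    by (intro continuous_intros cont_box[OF smp_X] cont_box[OF smp_ht])
  have c2: "continuous_on bx (\<lambda>x. dT a b (Xc A a b c) (fst x) (snd x) \<bullet> h (fst x) (snd x))"
    by (intro continuous_intros cont_box[OF smp_Xt] cont_box[OF smp_h])
  have "integral {0..2*pi} (\<lambda>\<theta>. integral {a..b} (\<lambda>t. Xc A a b c t \<theta> \<bullet> dT a b h t \<theta>))
     = integral {0..2*pi} (\<lambda>\<theta>. - integral {a..b} (\<lambda>t. dT a b (Xc A a b c) t \<theta> \<bullet> h t \<theta>))"
    by (intro integral_cong) (simp add: line)
  then show ?thesis
    unfolding box_iter2[OF c1] box_iter2[OF c2] by (simp add: integral_neg)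
qed

lemma ibp_th:
  fixes F G :: "real \<Rightarrow> real \<Rightarrow> complex"
  assumes F: "smp a b F" and G: "smp a b G" and t: "t \<in> {a..b}"
  shows "integral {0..2*pi} (\<lambda>\<theta>. dTh F t \<theta> \<bullet> G t \<theta>) = - integral {0..2*pi} (\<lambda>\<theta>. F t \<theta> \<bullet> dTh G t \<theta>)"
proof (rule ibp_interval)
  show "0 \<le> 2 * pi" by simp
  show "continuous_on {0..2 * pi} (F t)" using smp_line_th[OF F t] by simp
  show "continuous_on {0..2 * pi} (G t)" using smp_line_th[OF G t] by simp
  show "continuous_on {0..2 * pi} (dTh G t)" using smp_line_th[OF smp_dTh[OF ab G] t] by simp
  show "(F t has_vector_derivative dTh F t x) (at x)" for x
    using smp_dTh_has[OF ab F t] by simp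
  show "(G t has_vector_derivative dTh G t x) (at x)" for x
    using smp_dTh_has[OF ab G t] by simp
  show "F t (2 * pi) \<bullet> G t (2 * pi) - F t 0 \<bullet> G t 0 = 0"
    using smp_per[OF F t, of 0] smp_per[OF G t, of 0] by simp
qed

lemma ibp_box_th:
  fixes F G :: "real \<Rightarrow> real \<Rightarrow> complex"
  assumes F: "smp a b F" and G: "smp a b G"
  shows "integral bx (\<lambda>x. dTh F (fst x) (snd x) \<bullet> G (fst x) (snd x)) = - integral bx (\<lambda>x. F (fst x) (snd x) \<bullet> dTh G (fst x) (snd x))"
proof -
  have c1: "continuous_on bx (\<lambda>x. dTh F (fst x) (snd x) \<bullet> G (fst x) (snd x))"
    by (intro continuous_intros cont_box[OF smp_dTh[OF ab F]] cont_box[OF G])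
  have c2: "continuous_on bx (\<lambda>x. F (fst x) (snd x) \<bullet> dTh G (fst x) (snd x))"
    by (intro continuous_intros cont_box[OF smp_dTh[OF ab G]] cont_box[OF F])
  have "integral {a..b} (\<lambda>t. integral {0..2*pi} (\<lambda>\<theta>. dTh F t \<theta> \<bullet> G t \<theta>))
     = integral {a..b} (\<lambda>t. - integral {0..2*pi} (\<lambda>\<theta>. F t \<theta> \<bullet> dTh G t \<theta>))"
    by (intro integral_cong) (simp add: ibp_th[OF F G])
  then show ?thesis
    unfolding box_iter[OF c1] box_iter[OF c2] by (simp add: integral_neg)
qed


lemma vv_nz: "x \<in> bx \<Longrightarrow> vv x \<noteq> 0"
  using cth_nz' box_sub by blast

lemma vv_nz2: "(t, \<theta>) \<in> bx \<Longrightarrow> dTh c t \<theta> \<noteq> 0"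
  using vv_nz[of "(t, \<theta>)"] by simp

lemma int_box: "continuous_on bx (f :: real \<times> real \<Rightarrow> real) \<Longrightarrow> f integrable_on bx"
  unfolding bx_def by (rule integrable_continuous)

lemma first_var_value:
  "1/2 * integral bx (\<lambda>x. dPhi A (uu x) (vv x) (ww x) (du x) (dv x) (dw x))
   = - integral bx (\<lambda>x. Rc A a b c (fst x) (snd x) \<bullet> h (fst x) (snd x))"
proof -
  have nzb: "\<And>x. x \<in> bx \<Longrightarrow> cmod (vv x) \<noteq> 0" using vv_nz by simp
  have cX: "continuous_on bx (\<lambda>x. Xc A a b c (fst x) (snd x) \<bullet> du x)"
    by (intro continuous_intros cont_box[OF smp_X] cont_box[OF smp_ht])
  have cZ1: "continuous_on bx (\<lambda>x. Z1c A a b c (fst x) (snd x) \<bullet> dv x)"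
    unfolding Z1c_def
    by (intro continuous_intros cont_box[OF smp_curv] cont_box[OF smp_ct] cont_box[OF smp_cth]
        cont_box[OF smp_cthth] cont_box[OF smp_W] cont_box[OF smp_hth]) (auto simp: nzb dest: vv_nz2)
  have cZ2: "continuous_on bx (\<lambda>x. Z2c A a b c (fst x) (snd x) \<bullet> dw x)"
    by (intro continuous_intros cont_box[OF smp_Z2] cont_box[OF smp_hthth])
  have cZ2t: "continuous_on bx (\<lambda>x. Z2th A a b c (fst x) (snd x) \<bullet> dv x)"
    unfolding Z2th_def
    by (intro continuous_intros cont_box[OF smp_Wth] cont_box[OF smp_cth]
        cont_box[OF smp_cthth] cont_box[OF smp_W] cont_box[OF smp_hth]) (auto simp: nzb dest: vv_nz2)
  have cXt: "continuous_on bx (\<lambda>x. dT a b (Xc A a b c) (fst x) (snd x) \<bullet> h (fst x) (snd x))"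
    by (intro continuous_intros cont_box[OF smp_Xt] cont_box[OF smp_h])
  have cYt: "continuous_on bx (\<lambda>x. dTh (Yc A a b c) (fst x) (snd x) \<bullet> h (fst x) (snd x))"
    by (intro continuous_intros cont_box[OF smp_Yth] cont_box[OF smp_h])
  have P1: "dPhi A (uu x) (vv x) (ww x) (du x) (dv x) (dw x) / 2
     = Xc A a b c (fst x) (snd x) \<bullet> du x + Z1c A a b c (fst x) (snd x) \<bullet> dv x + Z2c A a b c (fst x) (snd x) \<bullet> dw x"
    if x: "x \<in> bx" for x
    unfolding Xc_def Z1c_def Z2c_def Wc_def curv_def
    by (rule dPhi_zero[where u="uu x" and w="ww x" and ?du="du x" and ?dv="dv x" and ?dw="dw x" and A=A, OF vv_nz[OF x]])
  define IX where "IX = integral bx (\<lambda>x. Xc A a b c (fst x) (snd x) \<bullet> du x)"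
  define IZ1 where "IZ1 = integral bx (\<lambda>x. Z1c A a b c (fst x) (snd x) \<bullet> dv x)"
  define IZ2 where "IZ2 = integral bx (\<lambda>x. Z2c A a b c (fst x) (snd x) \<bullet> dw x)"
  define IZ2t where "IZ2t = integral bx (\<lambda>x. Z2th A a b c (fst x) (snd x) \<bullet> dv x)"
  define IY where "IY = integral bx (\<lambda>x. Yc A a b c (fst x) (snd x) \<bullet> dv x)"
  define IYt where "IYt = integral bx (\<lambda>x. dTh (Yc A a b c) (fst x) (snd x) \<bullet> h (fst x) (snd x))"
  define IXt where "IXt = integral bx (\<lambda>x. dT a b (Xc A a b c) (fst x) (snd x) \<bullet> h (fst x) (snd x))"
  define IR where "IR = integral bx (\<lambda>x. Rc A a b c (fst x) (snd x) \<bullet> h (fst x) (snd x))"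
  have e0a: "1/2 * integral bx (\<lambda>x. dPhi A (uu x) (vv x) (ww x) (du x) (dv x) (dw x))
      = integral bx (\<lambda>x. dPhi A (uu x) (vv x) (ww x) (du x) (dv x) (dw x) / 2)"
    by (simp add: integral_mult_right[symmetric] field_simps)
  have e0b: "integral bx (\<lambda>x. dPhi A (uu x) (vv x) (ww x) (du x) (dv x) (dw x) / 2)
     = integral bx (\<lambda>x. Xc A a b c (fst x) (snd x) \<bullet> du x + Z1c A a b c (fst x) (snd x) \<bullet> dv x + Z2c A a b c (fst x) (snd x) \<bullet> dw x)"
    by (rule integral_cong) (rule P1)
  have e0c: "integral bx (\<lambda>x. Xc A a b c (fst x) (snd x) \<bullet> du x + Z1c A a b c (fst x) (snd x) \<bullet> dv x + Z2c A a b c (fst x) (snd x) \<bullet> dw x)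
     = IX + IZ1 + IZ2"
    unfolding IX_def IZ1_def IZ2_def
    using int_box[OF cX] int_box[OF cZ1] int_box[OF cZ2]
    by (simp add: integral_add integrable_add)
  have e1: "IZ2 = - IZ2t"
  proof -
    have "integral bx (\<lambda>x. dTh (Z2c A a b c) (fst x) (snd x) \<bullet> dv x) = - integral bx (\<lambda>x. Z2c A a b c (fst x) (snd x) \<bullet> dw x)"
      by (rule ibp_box_th[OF smp_Z2 smp_hth])
    moreover have "integral bx (\<lambda>x. dTh (Z2c A a b c) (fst x) (snd x) \<bullet> dv x) = integral bx (\<lambda>x. Z2th A a b c (fst x) (snd x) \<bullet> dv x)"
      by (rule integral_cong) (use box_sub in \<open>auto simp: dTh_Z2 mem_Times_iff\<close>)
    ultimately show ?thesis unfolding IZ2_def IZ2t_def by simp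
  qed
  have e2: "IZ1 - IZ2t = - IY"
  proof -
    have "IZ1 - IZ2t = integral bx (\<lambda>x. (Z1c A a b c (fst x) (snd x) - Z2th A a b c (fst x) (snd x)) \<bullet> dv x)"
      unfolding IZ1_def IZ2t_def
      using int_box[OF cZ1] int_box[OF cZ2t] by (simp add: integral_diff inner_diff_left)
    also have "\<dots> = integral bx (\<lambda>x. - (Yc A a b c (fst x) (snd x) \<bullet> dv x))"
      by (rule integral_cong) (use box_sub in \<open>auto simp: Z1_minus_Z2th mem_Times_iff\<close>)
    finally show ?thesis unfolding IY_def by (simp add: integral_neg)
  qed
  have e3: "IYt = - IY"
    unfolding IYt_def IY_def by (rule ibp_box_th[OF smp_Y smp_h])
  have e4: "IX = - IXt"
    unfolding IX_def IXt_def by (rule I1)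
  have e5: "IR = IXt - IYt"
    unfolding IR_def IXt_def IYt_def
    using int_box[OF cXt] int_box[OF cYt]
    by (simp add: Rc_def inner_diff_left integral_diff)
  show ?thesis
    unfolding e0a e0b e0c IR_def[symmetric] using e1 e2 e3 e4 e5 by linarith
qed

lemma first_variation:
  "((\<lambda>s. energy A a b (\<lambda>t \<theta>. c t \<theta> + of_real s * h t \<theta>)) has_real_derivative
    - integral bx (\<lambda>x. Rc A a b c (fst x) (snd x) \<bullet> h (fst x) (snd x))) (at 0)"
  using energy_deriv first_var_value by simp

end

lemma first_variation_global:
  assumes ab: "a < b" and sp: "smooth_path a b c" and im: "immersion_path a b c"
    and adm: "admissible_variation a b h"
  shows "((\<lambda>s. energy A a b (\<lambda>t \<theta>. c t \<theta> + of_real s * h t \<theta>)) has_real_derivative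
    - integral (cbox (a, 0) (b, 2 * pi)) (\<lambda>x. Rc A a b c (fst x) (snd x) \<bullet> h (fst x) (snd x))) (at 0)"
proof -
  interpret var_setting A a b c h
    by unfold_locales (use ab sp im adm in auto)
  show ?thesis using first_variation unfolding bx_def .
qed

lemma smooth_on_fst: "smooth_on S (\<lambda>x::real \<times> real. fst x)"
proof (rule smooth_on.intros[where ?g1.0="\<lambda>_. 1" and ?g2.0="\<lambda>_. 0"])
  have e: "(\<lambda>(u, v). u *\<^sub>R (1::real) + v *\<^sub>R 0) = (\<lambda>x::real \<times> real. fst x)" by auto
  show "((\<lambda>x. fst x) has_derivative (\<lambda>(u, v). u *\<^sub>R (\<lambda>_. 1::real) x + v *\<^sub>R (\<lambda>_. 0) x)) (at x within S)" for x
    unfolding e by (rule has_derivative_fst[OF has_derivative_ident])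
qed (rule smooth_on_const)+

lemma inner_ofreal_right: "z \<bullet> (complex_of_real r * w) = r * (z \<bullet> w)"
  by (simp add: inner_complex_def algebra_simps)

theorem mainTheorem15:
  fixes A a b :: real and c :: "real \<Rightarrow> real \<Rightarrow> complex"
  assumes "A \<ge> 0" and "a < b"
    and "smooth_path a b c" and "immersion_path a b c"
  shows "critical_point A a b c \<longleftrightarrow> geodesic_eq A a b c"
proof -
  have ab: "a < b" and spc: "smooth_path a b c" and imm: "immersion_path a b c" using assms by auto
  interpret setting A a b c by unfold_locales (use assms in auto)
  show ?thesis unfolding geodesic_eq_Rc
  proof
    assume crit: "critical_point A a b c"
    define h where "h = (\<lambda>t \<theta>. complex_of_real ((t - a) * (b - t)) * Rc A a b c t \<theta>)"
    have smh: "smooth_on S (\<lambda>(t, \<theta>). h t \<theta>)"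
    proof -
      have "smooth_on S (\<lambda>x. complex_of_real ((fst x - a) * (b - fst x)) * Rc A a b c (fst x) (snd x))"
        by (intro smooth_on_mult smooth_on_of_real smooth_on_diff smooth_on_fst smooth_on_const smp_smooth[OF smp_R])
      then show ?thesis by (simp add: h_def case_prod_unfold)
    qed
    have adm: "admissible_variation a b h"
      unfolding admissible_variation_def smooth_path_def
      using smh smp_per[OF smp_R] by (auto simp: h_def)
    have D1: "((\<lambda>s. energy A a b (\<lambda>t \<theta>. c t \<theta> + of_real s * h t \<theta>)) has_real_derivative 0) (at 0)"
      using crit adm unfolding critical_point_def by blast
    have D2: "((\<lambda>s. energy A a b (\<lambda>t \<theta>. c t \<theta> + of_real s * h t \<theta>)) has_real_derivative
      - integral (cbox (a, 0) (b, 2 * pi)) (\<lambda>x. Rc A a b c (fst x) (snd x) \<bullet> h (fst x) (snd x))) (at 0)"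
      by (rule first_variation_global[OF ab spc imm adm])
    have I0: "integral (cbox (a, 0) (b, 2 * pi)) (\<lambda>x. Rc A a b c (fst x) (snd x) \<bullet> h (fst x) (snd x)) = 0"
      using DERIV_unique[OF D1 D2] by simp
    define f where "f x = (fst x - a) * (b - fst x) * (cmod (Rc A a b c (fst x) (snd x)))\<^sup>2" for x
    have fR: "Rc A a b c (fst x) (snd x) \<bullet> h (fst x) (snd x) = f x" for x
      unfolding f_def h_def inner_ofreal_right power2_norm_eq_inner[symmetric] by (rule refl)
    have Bsub: "cbox (a, 0) (b, 2 * pi) \<subseteq> S"
      unfolding cbox_Pair_eq by (auto simp: cbox_interval)
    have cR: "continuous_on (cbox (a, 0) (b, 2 * pi)) (\<lambda>x. Rc A a b c (fst x) (snd x))"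
      using smp_cont[OF smp_R] Bsub continuous_on_subset by blast
    have cf: "continuous_on (cbox (a, 0) (b, 2 * pi)) f"
      unfolding f_def by (intro continuous_intros cR)
    have f_int: "(f has_integral 0) (cbox (a, 0) (b, 2 * pi))"
    proof -
      have "f integrable_on cbox (a, 0) (b, 2 * pi)" using cf by (rule integrable_continuous)
      moreover have "integral (cbox (a, 0) (b, 2 * pi)) f = 0" using I0 fR by simp
      ultimately show ?thesis using has_integral_integral by metis
    qed
    have fnn: "0 \<le> f x" if "x \<in> box (a, 0) (b, 2 * pi)" for x
    proof -
      have "x \<in> cbox (a, 0) (b, 2 * pi)" using that box_subset_cbox by blast
      then have "a \<le> fst x" "fst x \<le> b" unfolding cbox_Pair_eq by (auto simp: cbox_interval)
      then show ?thesis unfolding f_def by (intro mult_nonneg_nonneg) auto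
    qed
    have bne: "box (a, 0) (b, 2 * pi) \<noteq> {}"
    proof -
      have "((a + b) / 2, pi) \<in> box (a, 0) (b, 2 * pi)"
        using ab by (auto simp: box_prod box_real)
      then show ?thesis by blast
    qed
    have f0: "f x = 0" if "x \<in> cbox (a, 0) (b, 2 * pi)" for x
      by (rule has_integral_0_cbox_imp_0[OF cf fnn f_int bne that])
    have R_int: "Rc A a b c t \<theta> = 0" if t: "t \<in> {a<..<b}" and th: "\<theta> \<in> {0..2*pi}" for t \<theta>
    proof -
      have "(t, \<theta>) \<in> cbox (a, 0) (b, 2 * pi)" using t th unfolding cbox_Pair_eq by (auto simp: cbox_interval)
      then have "f (t, \<theta>) = 0" by (rule f0)
      moreover have "(t - a) * (b - t) > 0" using t by auto
      moreover have "t \<noteq> a" "t \<noteq> b" using t by auto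
      ultimately show ?thesis unfolding f_def by auto
    qed
    have R_cl: "Rc A a b c t \<theta> = 0" if t: "t \<in> {a..b}" and th: "\<theta> \<in> {0..2*pi}" for t \<theta>
    proof -
      have "continuous_on (closure {a<..<b}) (\<lambda>s. Rc A a b c s \<theta>)"
        using smp_line_t[OF smp_R] ab by (simp add: closure_greaterThanLessThan)
      from continuous_constant_on_closure[OF this, of 0 t] R_int[OF _ th] t ab
      show ?thesis by (simp add: closure_greaterThanLessThan)
    qed
    show "\<forall>t\<in>{a..b}. \<forall>\<theta>. Rc A a b c t \<theta> = 0"
    proof (intro ballI allI)
      fix t \<theta> assume t: "t \<in> {a..b}"
      obtain \<theta>' where th': "\<theta>' \<in> {0..2*pi}" "Rc A a b c t \<theta> = Rc A a b c t \<theta>'"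
        using periodic_reduce[of "Rc A a b c t" \<theta>] smp_per[OF smp_R t] by blast
      then show "Rc A a b c t \<theta> = 0" using R_cl[OF t] by simp
    qed
  next
    assume R0: "\<forall>t\<in>{a..b}. \<forall>\<theta>. Rc A a b c t \<theta> = 0"
    show "critical_point A a b c"
      unfolding critical_point_def
    proof (intro allI impI)
      fix h assume adm: "admissible_variation a b h"
      have "integral (cbox (a, 0) (b, 2 * pi)) (\<lambda>x. Rc A a b c (fst x) (snd x) \<bullet> h (fst x) (snd x))
          = integral (cbox (a, 0) (b, 2 * pi)) (\<lambda>x. 0)"
        by (rule integral_cong) (use R0 in \<open>auto simp: cbox_Pair_eq cbox_interval\<close>)
      then show "((\<lambda>s. energy A a b (\<lambda>t \<theta>. c t \<theta> + of_real s * h t \<theta>)) has_real_derivative 0) (at 0)"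
        using first_variation_global[OF ab spc imm adm, of A] by simp
    qed
  qed
qed

end
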